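(* Let $G=\mathbb{Z}/p^r\mathbb{Z}$ be a cyclic $p$-group of $p$-rank $r$. The prime ideals of the Burnside Tambara functor $\Omega_G$ are exactly the following. (i) For each prime integer $q\neq p$, the prime ideals over $(q)\subseteq R_0$ are exactly the $r+1$ ideals $$\mathcal{S}^r(q)\subsetneq \mathcal{L}\mathcal{S}^{r-1}(q)\subsetneq\cdots\subsetneq\mathcal{L}^{r}(q).$$ (ii) Over $(p)\subseteq R_0$ there is exactly one prime ideal, namely $\mathcal{L}^r(p)$. (iii) Over $0\subseteq R_0$ there are exactly the $r+1$ prime ideals $$0\subsetneq \mathcal{L}(0)\subsetneq\cdots\subsetneq\mathcal{L}^r(0).$$ Hence $$\mathit{Spec}\,\Omega_G=\{\mathcal{L}^r(p)\}\cup\{\mathcal{L}^i(0)\mid 0\le i\le r\}\cup\{\mathcal{L}^i\mathcal{S}^{r-i}(q)\mid 0\le i\le r,\ q\text{ a prime different from }p\}.$$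
   Context: Fix a prime $p$ and an integer $r\ge0$. For $0\le k\le r$ let $R_k$ be the commutative ring which is free as a $\mathbb{Z}$-module with basis $X_{k,0},\dots,X_{k,k}$ and multiplication $X_{k,i}X_{k,j}=p^{k-\max(i,j)}X_{k,\min(i,j)}$; thus $X_{k,k}=1$, and an integer $n$ is identified with $nX_{k,k}$. For $0\le k\le\ell\le r$ define: the additive map $\mathrm{ind}^\ell_k:R_k\to R_\ell$, $X_{k,i}\mapsto X_{\ell,i}$; the ring homomorphism $\mathrm{res}^\ell_k:R_\ell\to R_k$, $\mathrm{res}^\ell_k(X_{\ell,i})=p^{\ell-k}X_{k,i}$ if $i\le k$ and $=p^{\ell-i}$ if $i\ge k$; and the multiplicative map $\mathrm{jnd}^\ell_k:R_k\to R_\ell$, $$\mathrm{jnd}^\ell_k\Big(\sum_{i=0}^k m_iX_{k,i}\Big)=m_kX_{\ell,\ell}+\sum_{k\le i<\ell}\frac{m_k^{p^{\ell-i}}-m_k^{p^{\ell-i-1}}}{p^{\ell-i}}X_{\ell,i}+\sum_{0\le i<k}\frac{(\sum_{s=i}^k m_sp^{k-s})^{p^{\ell-k}}-(\sum_{s=i+1}^k m_sp^{k-s})^{p^{\ell-k}}}{p^{\ell-i}}X_{\ell,i}$$ ($m_i\in\mathbb{Z}$; all coefficients are integers). For $k=\ell$ these maps are the identity. These data are the Burnside Tambara functor $\Omega_G$ on $G=\mathbb{Z}/p^r\mathbb{Z}$ ($R_k=\Omega_G(G/H_k)$, $H_k$ the subgroup of order $p^k$); keeping only indices $\le n$ gives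 $\Omega_{H_n}$ for $0\le n\le r$. An ideal of $\Omega_{H_n}$ is a sequence $[I_0,\dots,I_n]$ of ideals $I_k\subseteq R_k$ such that for every $1\le k\le n$: $\mathrm{ind}^k_{k-1}(I_{k-1})\subseteq I_k$, $\mathrm{res}^k_{k-1}(I_k)\subseteq I_{k-1}$, $\mathrm{jnd}^k_{k-1}(I_{k-1})\subseteq I_k$. Inclusion of ideals is componentwise. The ideal is over an ideal $J\subseteq R_0$ if $I_0=J$. It is proper if $I_0\ne R_0$ (equivalently $I_k\neq R_k$ for all $k$). A proper ideal $[I_0,\dots,I_n]$ is prime if for all $0\le\ell\le k\le n$, $a\in R_k$, $b\in R_\ell$: whenever $(\mathrm{jnd}^m_i\mathrm{res}^k_i(a))\cdot(\mathrm{jnd}^m_j\mathrm{res}^\ell_j(b))\in I_m$ for all $0\le i\le k$, $0\le j\le\ell$ with $m=\max(i,j)$, then $a\in I_k$ or $b\in I_\ell$. (This is the specialization of the general notion of prime ideal of a Tambara functor.) $\mathit{Spec}\,\Omega_G$ is the set of prime ideals of $\Omega_G=\Omega_{H_r}$. Operators: for $1\le k\le r$ and an ideal $I\subseteq R_{k-1}$, $L(I)=L_k(I)=(\mathrm{res}^k_{k-1})^{-1}(I)\subseteq R_k$ and $S(I)=S_k(I)$ is the ideal of $R_k$ generated by $\mathrm{ind}^k_{k-1}(I)\cup\mathrm{jnd}^k_{k-1}(I)$. For an ideal $\mathscr I=[I_0,\dots,I_{k-1}]$ of $\Omega_{H_{k-1}}$, $\mathcal{L}\mathscr I=[I_0,\dots,I_{k-1},L(I_{k-1})]$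 and $\mathcal{S}\mathscr I=[I_0,\dots,I_{k-1},S(I_{k-1})]$, ideals of $\Omega_{H_k}$; $\mathcal L^n,\mathcal S^n$ denote iterates. For $x\in\mathbb{Z}$, $(x)$ denotes the ideal $[x\mathbb{Z}]$ of $\Omega_{H_0}$ (so e.g. $\mathcal L^i\mathcal S^{r-i}(q)$ is an ideal of $\Omega_{H_r}$), and $\mathcal{L}^i(0)$ denotes $\mathcal L$ applied $i$ times to the zero ideal $[0,\dots,0]$ of $\Omega_{H_{r-i}}$. *)

theory Defs
  imports "HOL-Computational_Algebra.Primes"
begin

text \<open>Elements of R_k are integer coefficient vectors x :: nat => int with respect to the
basis X_{k,0},...,X_{k,k}; the coefficient of X_{k,i} is x i, and x i = 0 for i > k.\<close>

type_synonym elt = "nat \<Rightarrow> int"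

definition carrierR :: "nat \<Rightarrow> elt set" where
  "carrierR k = {x. \<forall>i>k. x i = 0}"

text \<open>Multiplication of R_k: X_{k,i} X_{k,j} = p^(k - max i j) X_{k, min i j}.\<close>
definition mulR :: "nat \<Rightarrow> nat \<Rightarrow> elt \<Rightarrow> elt \<Rightarrow> elt" where
  "mulR p k x y = (\<lambda>m. if m \<le> k then
      (\<Sum>i\<le>k. \<Sum>j\<le>k. if min i j = m then x i * y j * int p ^ (k - max i j) else 0)
    else 0)"

definition zeroR :: elt where "zeroR = (\<lambda>_. 0)"

definition addR :: "elt \<Rightarrow> elt \<Rightarrow> elt" where "addR x y = (\<lambda>m. x m + y m)"

definition negR :: "elt \<Rightarrow> elt" where "negR x = (\<lambda>m. - x m)"

definition is_ideal_R :: "nat \<Rightarrow> nat \<Rightarrow> elt set \<Rightarrow> bool" where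
  "is_ideal_R p k I \<longleftrightarrow> I \<subseteq> carrierR k \<and> zeroR \<in> I
     \<and> (\<forall>x\<in>I. \<forall>y\<in>I. addR x y \<in> I) \<and> (\<forall>x\<in>I. negR x \<in> I)
     \<and> (\<forall>a\<in>carrierR k. \<forall>x\<in>I. mulR p k a x \<in> I)"

text \<open>ind^l_k : X_{k,i} |-> X_{l,i} (coefficient vectors unchanged).\<close>
definition indR :: "nat \<Rightarrow> nat \<Rightarrow> elt \<Rightarrow> elt" where
  "indR k l x = x"

text \<open>res^l_k, extended additively from res(X_{l,i}) = p^(l-k) X_{k,i} (i <= k),
  = p^(l-i) (i >= k).\<close>
definition resR :: "nat \<Rightarrow> nat \<Rightarrow> nat \<Rightarrow> elt \<Rightarrow> elt" where
  "resR p l k x = (\<lambda>m. if m < k then int p ^ (l - k) * x m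
      else if m = k then (\<Sum>i\<in>{k..l}. int p ^ (l - i) * x i) else 0)"

text \<open>jnd^l_k (the norm map), by the explicit formula; the divisions are exact.\<close>
definition jndR :: "nat \<Rightarrow> nat \<Rightarrow> nat \<Rightarrow> elt \<Rightarrow> elt" where
  "jndR p k l x = (\<lambda>i.
     if i = l then x k
     else if k \<le> i \<and> i < l then
       (x k ^ (p ^ (l - i)) - x k ^ (p ^ (l - i - 1))) div (int p ^ (l - i))
     else if i < k then
       ((\<Sum>s\<in>{i..k}. x s * int p ^ (k - s)) ^ (p ^ (l - k))
         - (\<Sum>s\<in>{Suc i..k}. x s * int p ^ (k - s)) ^ (p ^ (l - k))) div (int p ^ (l - i))
     else 0)"

text \<open>Ideals of Omega_{H_n}: lists [I_0, ..., I_n].\<close>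
definition is_TF_ideal :: "nat \<Rightarrow> nat \<Rightarrow> elt set list \<Rightarrow> bool" where
  "is_TF_ideal p n Is \<longleftrightarrow> length Is = Suc n
     \<and> (\<forall>k\<le>n. is_ideal_R p k (Is ! k))
     \<and> (\<forall>k\<in>{1..n}. indR (k - 1) k ` (Is ! (k - 1)) \<subseteq> Is ! k
                  \<and> resR p k (k - 1) ` (Is ! k) \<subseteq> Is ! (k - 1)
                  \<and> jndR p (k - 1) k ` (Is ! (k - 1)) \<subseteq> Is ! k)"

definition is_prime_TF :: "nat \<Rightarrow> nat \<Rightarrow> elt set list \<Rightarrow> bool" where
  "is_prime_TF p n Is \<longleftrightarrow> is_TF_ideal p n Is \<and> Is ! 0 \<noteq> carrierR 0
     \<and> (\<forall>k l a b. l \<le> k \<longrightarrow> k \<le> n \<longrightarrow> a \<in> carrierR k \<longrightarrow> b \<in> carrierR l \<longrightarrow>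
          (\<forall>i\<le>k. \<forall>j\<le>l.
             mulR p (max i j) (jndR p i (max i j) (resR p k i a))
                              (jndR p j (max i j) (resR p l j b)) \<in> Is ! max i j)
          \<longrightarrow> a \<in> Is ! k \<or> b \<in> Is ! l)"

definition SpecOmega :: "nat \<Rightarrow> nat \<Rightarrow> elt set list set" where
  "SpecOmega p r = {P. is_prime_TF p r P}"

definition ideal_le :: "elt set list \<Rightarrow> elt set list \<Rightarrow> bool" where
  "ideal_le A B \<longleftrightarrow> length A = length B \<and> (\<forall>k<length A. A ! k \<subseteq> B ! k)"

definition ideal_less :: "elt set list \<Rightarrow> elt set list \<Rightarrow> bool" where
  "ideal_less A B \<longleftrightarrow> ideal_le A B \<and> A \<noteq> B"

definition gen_ideal :: "nat \<Rightarrow> nat \<Rightarrow> elt set \<Rightarrow> elt set" where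
  "gen_ideal p k A = \<Inter>{J. is_ideal_R p k J \<and> A \<subseteq> J}"

definition opL :: "nat \<Rightarrow> nat \<Rightarrow> elt set \<Rightarrow> elt set" where
  "opL p k I = {x \<in> carrierR k. resR p k (k - 1) x \<in> I}"

definition opS :: "nat \<Rightarrow> nat \<Rightarrow> elt set \<Rightarrow> elt set" where
  "opS p k I = gen_ideal p k (indR (k - 1) k ` I \<union> jndR p (k - 1) k ` I)"

text \<open>calL, calS : ideals of Omega_{H_(k-1)} to ideals of Omega_{H_k}, where k = length Is.\<close>
definition calL :: "nat \<Rightarrow> elt set list \<Rightarrow> elt set list" where
  "calL p Is = Is @ [opL p (length Is) (last Is)]"

definition calS :: "nat \<Rightarrow> elt set list \<Rightarrow> elt set list" where
  "calS p Is = Is @ [opS p (length Is) (last Is)]"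

definition princ :: "int \<Rightarrow> elt set list" where
  "princ x = [{y \<in> carrierR 0. x dvd y 0}]"

definition zeroTF :: "nat \<Rightarrow> elt set list" where
  "zeroTF n = replicate (Suc n) {zeroR}"

end

theory Submission
  imports Defs "HOL-Number_Theory.Number_Theory"
begin


definition markR :: "nat \<Rightarrow> nat \<Rightarrow> elt \<Rightarrow> nat \<Rightarrow> int" where
  "markR p k x t = (\<Sum>s\<in>{t..k}. x s * int p ^ (k - s))"

lemma markR_top: "markR p k x k = x k"
  by (simp add: markR_def)

lemma markR_step: "t < k \<Longrightarrow> markR p k x t = x t * int p ^ (k - t) + markR p k x (Suc t)"
  unfolding markR_def by (simp add: sum.atLeast_Suc_atMost)

lemma markR_gt: "k < t \<Longrightarrow> markR p k x t = 0"
  by (simp add: markR_def)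

lemma markR_lin: "markR p k (\<lambda>i. a * x i + b * y i) t = a * markR p k x t + b * markR p k y t"
  unfolding markR_def by (simp add: sum.distrib sum_distrib_left algebra_simps)

lemma markR_cong: "(\<And>i. t \<le> i \<Longrightarrow> i \<le> k \<Longrightarrow> x i = y i) \<Longrightarrow> markR p k x t = markR p k y t"
  unfolding markR_def by (rule sum.cong) auto

lemma mark_zero_imp:
  assumes "prime p" "x \<in> carrierR k" "\<forall>t\<le>k. markR p k x t = 0"
  shows "x = zeroR"
proof -
  have p0: "int p \<noteq> 0" using assms(1) by (simp add: prime_gt_0_nat)
  have "\<forall>i. k - d \<le> i \<and> i \<le> k \<longrightarrow> x i = 0" for d
  proof (induction d)
    case 0 then show ?case using assms(3) by (auto simp: markR_top)
  next
    case (Suc d)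
    show ?case
    proof (intro allI impI)
      fix i assume i: "k - Suc d \<le> i \<and> i \<le> k"
      show "x i = 0"
      proof (cases "k - d \<le> i")
        case True then show ?thesis using Suc i by auto
      next
        case False
        then have ik: "i < k" and idd: "Suc i = k - d" using i by auto
        have "markR p k x (Suc i) = 0"
          using assms(3) idd i by (metis Suc_leI ik)
        then have "markR p k x i = x i * int p ^ (k - i)" using markR_step[OF ik] by simp
        then show ?thesis using assms(3) i p0 by auto
      qed
    qed
  qed
  then have "\<forall>i\<le>k. x i = 0" by (metis diff_self_eq_0 diff_zero le0 order_refl)
  then show ?thesis using assms(2) unfolding carrierR_def zeroR_def fun_eq_iff
    using not_le by blast
qed

lemma mark_eq:
  assumes "prime p" "x \<in> carrierR k" "y \<in> carrierR k" "\<forall>t\<le>k. markR p k x t = markR p k y t"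
  shows "x = y"
proof -
  let ?z = "\<lambda>i. 1 * x i + (-1) * y i"
  have "?z \<in> carrierR k" using assms(2,3) by (simp add: carrierR_def)
  moreover have "\<forall>t\<le>k. markR p k ?z t = 0" using assms(4) by (simp only: markR_lin) simp
  ultimately have "?z = zeroR" using mark_zero_imp assms(1) by blast
  then show ?thesis by (auto simp: zeroR_def fun_eq_iff)
qed



lemma markR_atMost: "markR p k x t = (\<Sum>i\<le>k. if t \<le> i then x i * int p ^ (k - i) else 0)"
proof -
  have "{t..k} = {i\<in>{..k}. t \<le> i}" by auto
  then show ?thesis unfolding markR_def by (simp only: sum.inter_filter[OF finite_atMost])
qed

lemma markR_mul:
  assumes "t \<le> k"
  shows "markR p k (mulR p k x y) t = markR p k x t * markR p k y t"
proof -
  let ?P = "int p"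
  have "markR p k (mulR p k x y) t = (\<Sum>m\<in>{t..k}. (\<Sum>i\<le>k. \<Sum>j\<le>k. if min i j = m then x i * y j * ?P ^ (k - max i j) else 0) * ?P ^ (k - m))"
    unfolding markR_def mulR_def by (rule sum.cong) auto
  also have "\<dots> = (\<Sum>m\<in>{t..k}. \<Sum>i\<le>k. \<Sum>j\<le>k. if min i j = m then x i * y j * ?P ^ (k - max i j) * ?P ^ (k - min i j) else 0)"
    by (simp only: sum_distrib_right, intro sum.cong refl, auto)
  also have "\<dots> = (\<Sum>i\<le>k. \<Sum>j\<le>k. \<Sum>m\<in>{t..k}. if min i j = m then x i * y j * ?P ^ (k - max i j) * ?P ^ (k - min i j) else 0)"
    apply (subst sum.swap[where A="{t..k}"]) apply (rule sum.cong[OF refl]) apply (subst sum.swap[where A="{t..k}"]) apply (rule refl) done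
  also have "\<dots> = (\<Sum>i\<le>k. \<Sum>j\<le>k. if t \<le> min i j then x i * y j * ?P ^ (k - max i j) * ?P ^ (k - min i j) else 0)"
    by (rule sum.cong[OF refl], rule sum.cong[OF refl]) (auto simp: sum.delta)
  also have "\<dots> = (\<Sum>i\<le>k. \<Sum>j\<le>k. (if t \<le> i then x i * ?P ^ (k - i) else 0) * (if t \<le> j then y j * ?P ^ (k - j) else 0))"
    by (rule sum.cong[OF refl], rule sum.cong[OF refl]) (auto simp: max_def min_def)
  also have "\<dots> = (\<Sum>i\<le>k. if t \<le> i then x i * ?P ^ (k - i) else 0) * (\<Sum>j\<le>k. if t \<le> j then y j * ?P ^ (k - j) else 0)"
    by (simp add: sum_product)
  finally show ?thesis by (simp add: markR_atMost)
qed

lemma mulR_carrier: "mulR p k x y \<in> carrierR k"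
  by (simp add: mulR_def carrierR_def)

lemma markR_res:
  assumes "t \<le> i" "i \<le> k"
  shows "markR p i (resR p k i x) t = markR p k x t"
proof -
  let ?P = "int p"
  have "markR p i (resR p k i x) t = (\<Sum>m\<in>{t..<i}. ?P ^ (k - i) * x m * ?P ^ (i - m)) + (\<Sum>s\<in>{i..k}. ?P ^ (k - s) * x s)"
  proof -
    have "{t..i} = insert i {t..<i}" using assms by auto
    then have "markR p i (resR p k i x) t = (\<Sum>m\<in>{t..<i}. resR p k i x m * ?P ^ (i - m)) + resR p k i x i"
      unfolding markR_def by simp
    also have "(\<Sum>m\<in>{t..<i}. resR p k i x m * ?P ^ (i - m)) = (\<Sum>m\<in>{t..<i}. ?P ^ (k - i) * x m * ?P ^ (i - m))"
      by (rule sum.cong[OF refl]) (simp add: resR_def)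
    finally show ?thesis by (simp add: resR_def)
  qed
  also have "\<dots> = (\<Sum>m\<in>{t..<i}. x m * ?P ^ (k - m)) + (\<Sum>s\<in>{i..k}. x s * ?P ^ (k - s))"
  proof -
    have "(\<Sum>m\<in>{t..<i}. ?P ^ (k - i) * x m * ?P ^ (i - m)) = (\<Sum>m\<in>{t..<i}. x m * ?P ^ (k - m))"
    proof (rule sum.cong[OF refl])
      fix m assume "m \<in> {t..<i}"
      then have "k - m = (k - i) + (i - m)" using assms by auto
      then show "?P ^ (k - i) * x m * ?P ^ (i - m) = x m * ?P ^ (k - m)" by (simp add: power_add)
    qed
    then show ?thesis by (simp add: mult.commute)
  qed
  also have "\<dots> = markR p k x t"
  proof -
    have "{t..k} = {t..<i} \<union> {i..k}" "{t..<i} \<inter> {i..k} = {}" using assms by auto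
    then show ?thesis unfolding markR_def by (simp add: sum.union_disjoint)
  qed
  finally show ?thesis .
qed

lemma resR_carrier: "resR p k i x \<in> carrierR i"
  by (simp add: resR_def carrierR_def)

lemma markR_ind:
  assumes "x \<in> carrierR k" "t \<le> k"
  shows "markR p (Suc k) x t = int p * markR p k x t"
proof -
  have "x (Suc k) = 0" using assms by (simp add: carrierR_def)
  moreover have "{t..Suc k} = insert (Suc k) {t..k}" using assms by auto
  ultimately have "markR p (Suc k) x t = (\<Sum>s\<in>{t..k}. x s * int p ^ (Suc k - s))"
    unfolding markR_def by simp
  also have "\<dots> = (\<Sum>s\<in>{t..k}. int p * (x s * int p ^ (k - s)))"
    by (rule sum.cong[OF refl]) (auto simp: Suc_diff_le)
  finally show ?thesis by (simp add: markR_def sum_distrib_left)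
qed



lemma pow_lift1:
  fixes a b :: int
  assumes "prime p" "int p ^ e dvd a - b" "1 \<le> e"
  shows "int p ^ Suc e dvd a ^ p - b ^ p"
proof -
  have "int p dvd a - b" using assms(2,3) dvd_power[of e "int p"] dvd_trans by auto
  then have cab: "[a = b] (mod int p)" by (simp add: cong_iff_dvd_diff)
  have "[(\<Sum>i<p. b ^ (p - Suc i) * a ^ i) = (\<Sum>i<p. b ^ (p - Suc i) * b ^ i)] (mod int p)"
    by (intro cong_sum cong_mult cong_refl cong_pow cab)
  moreover have "(\<Sum>i<p. b ^ (p - Suc i) * b ^ i) = (\<Sum>i<p. b ^ (p - 1))"
    by (rule sum.cong[OF refl]) (simp add: power_add[symmetric])
  moreover have "(\<Sum>i<p. b ^ (p - 1)) = int p * b ^ (p - 1)" by simp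
  ultimately have "int p dvd (\<Sum>i<p. b ^ (p - Suc i) * a ^ i)"
    by (metis cong_dvd_iff dvd_triv_left)
  then have "int p ^ e * int p dvd (a - b) * (\<Sum>i<p. b ^ (p - Suc i) * a ^ i)"
    using assms(2) by (rule mult_dvd_mono[rotated])
  then show ?thesis by (simp add: power_diff_sumr2 mult.commute)
qed

lemma pow_lift:
  fixes a b :: int
  assumes "prime p" "int p ^ e dvd a - b" "1 \<le> e"
  shows "int p ^ (e + t) dvd a ^ (p ^ t) - b ^ (p ^ t)"
proof (induction t)
  case 0 then show ?case using assms by simp
next
  case (Suc t)
  have "int p ^ Suc (e + t) dvd (a ^ (p ^ t)) ^ p - (b ^ (p ^ t)) ^ p"
    using pow_lift1[OF assms(1) Suc] assms(3) by simp
  then show ?case by (simp add: power_mult[symmetric] mult.commute)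
qed

lemma fermat_int:
  fixes x :: int
  assumes "prime p"
  shows "int p dvd x ^ p - x"
proof -
  define a where "a = nat (x mod int p)"
  have p0: "int p > 0" using assms prime_gt_0_nat by auto
  have xa: "[x = int a] (mod int p)" using p0 unfolding a_def
    by (simp add: cong_def)
  have "[a ^ p = a] (mod p)"
  proof (cases "p dvd a")
    case True
    then have "[a = 0] (mod p)" by (simp add: cong_0_iff)
    moreover have "[a ^ p = 0] (mod p)" using True assms
    proof -
      have "a dvd a ^ p" using assms prime_gt_0_nat by simp
      then show ?thesis using True by (simp add: cong_0_iff dvd_trans[OF True])
    qed
    ultimately show ?thesis by (metis cong_sym cong_trans)
  next
    case False
    then have "[a ^ (p - 1) = 1] (mod p)" using fermat_theorem assms by blast
    then have "[a * a ^ (p - 1) = a * 1] (mod p)" by (rule cong_scalar_left)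
    moreover have "a * a ^ (p - 1) = a ^ p" using assms
      by (metis Suc_diff_1 power_Suc prime_gt_0_nat)
    ultimately show ?thesis by simp
  qed
  then have "[int a ^ p = int a] (mod int p)"
    by (metis cong_int_iff of_nat_power)
  then have "[x ^ p = x] (mod int p)" using xa
    by (meson cong_pow cong_sym cong_trans)
  then show ?thesis by (simp add: cong_iff_dvd_diff)
qed



definition psi :: "nat \<Rightarrow> nat \<Rightarrow> nat \<Rightarrow> elt \<Rightarrow> nat \<Rightarrow> int" where
  "psi p k l x i = (if i \<le> k then markR p k x i ^ (p ^ (l - k)) else x k ^ (p ^ (l - i)))"

lemma jnd_coef:
  assumes "prime p" "k \<le> l" "i < l"
  shows "int p ^ (l - i) dvd psi p k l x i - psi p k l x (Suc i)
     \<and> jndR p k l x i = (psi p k l x i - psi p k l x (Suc i)) div int p ^ (l - i)"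
proof (cases "i < k")
  case True
  have e: "markR p k x i - markR p k x (Suc i) = x i * int p ^ (k - i)"
    using markR_step[OF True] by simp
  have "int p ^ (k - i + (l - k)) dvd markR p k x i ^ (p ^ (l - k)) - markR p k x (Suc i) ^ (p ^ (l - k))"
    by (rule pow_lift[OF assms(1)]) (use e True in auto)
  moreover have "k - i + (l - k) = l - i" using True assms by auto
  ultimately show ?thesis using True assms
    unfolding psi_def jndR_def markR_def by (auto simp: Suc_le_eq)
next
  case False
  then have ki: "k \<le> i" by simp
  define s where "s = l - Suc i"
  have ls: "l - i = Suc s" using assms s_def by auto
  have "int p ^ (1 + s) dvd (x k ^ p) ^ (p ^ s) - x k ^ (p ^ s)"
    by (rule pow_lift[OF assms(1)]) (use fermat_int[OF assms(1)] in auto)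
  moreover have "(x k ^ p) ^ (p ^ s) = x k ^ (p ^ Suc s)" by (simp add: power_mult[symmetric])
  moreover have "psi p k l x i = x k ^ (p ^ (l - i))" using ki markR_top[of p k x]
    unfolding psi_def by (auto simp: le_antisym)
  moreover have "psi p k l x (Suc i) = x k ^ (p ^ s)" using ki unfolding psi_def s_def by auto
  moreover have "jndR p k l x i = (x k ^ (p ^ (l - i)) - x k ^ (p ^ s)) div int p ^ (l - i)"
    using ki assms unfolding jndR_def s_def by auto
  ultimately show ?thesis using ls by auto
qed

lemma jnd_top:
  assumes "k \<le> l"
  shows "jndR p k l x l = psi p k l x l"
  using assms unfolding jndR_def psi_def by (auto simp: markR_top)

lemma telescope:
  assumes "\<And>i. t \<le> i \<Longrightarrow> i < l \<Longrightarrow> y i * int p ^ (l - i) = f i - f (Suc i)"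
    and "y l = f l" and "t \<le> l"
  shows "markR p l y t = f t"
  using assms
proof (induction "l - t" arbitrary: t)
  case 0 then show ?case by (simp add: markR_top)
next
  case (Suc d)
  then have tl: "t < l" by simp
  have "markR p l y (Suc t) = f (Suc t)"
    using Suc.hyps(1)[of "Suc t"] Suc.prems Suc.hyps(2) tl by auto
  then show ?case using markR_step[OF tl, of p y] Suc.prems(1)[of t] tl by simp
qed

lemma markR_jnd:
  assumes "prime p" "k \<le> l" "t \<le> l"
  shows "markR p l (jndR p k l x) t = psi p k l x t"
proof (rule telescope[where y="jndR p k l x" and f="psi p k l x"])
  show "jndR p k l x l = psi p k l x l" by (rule jnd_top[OF assms(2)])
  show "t \<le> l" by (rule assms(3))
next
  fix i assume "t \<le> i" "i < l"
  from jnd_coef[OF assms(1,2) this(2)] show "jndR p k l x i * int p ^ (l - i) = psi p k l x i - psi p k l x (Suc i)"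
    by auto
qed

lemma jnd_carrier: "k \<le> l \<Longrightarrow> jndR p k l x \<in> carrierR l"
  by (simp add: jndR_def carrierR_def)



lemma res_id:
  assumes "prime p" "x \<in> carrierR k"
  shows "resR p k k x = x"
  by (rule mark_eq[OF assms(1) resR_carrier assms(2)]) (auto simp: markR_res)

lemma psi_same: "t \<le> k \<Longrightarrow> psi p k k x t = markR p k x t"
  by (simp add: psi_def)

lemma jnd_id:
  assumes "prime p" "x \<in> carrierR k"
  shows "jndR p k k x = x"
  by (rule mark_eq[OF assms(1) jnd_carrier assms(2)]) (auto simp: markR_jnd[OF assms(1)] psi_same)

lemma mulR_comm:
  assumes "prime p"
  shows "mulR p k x y = mulR p k y x"
  by (rule mark_eq[OF assms(1) mulR_carrier mulR_carrier]) (auto simp: markR_mul)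

lemma markR_jnd_top:
  assumes "prime p" "i \<le> M"
  shows "markR p M (jndR p i M z) M = z i"
proof -
  have "markR p M (jndR p i M z) M = psi p i M z M" by (rule markR_jnd[OF assms order_refl])
  then show ?thesis using assms by (auto simp: psi_def markR_top)
qed

lemma dvd_pow_pos: "(q::int) dvd a \<Longrightarrow> 0 < n \<Longrightarrow> q dvd a ^ n"
  by (metis dvd_power dvd_trans)

lemma jnd_comp:
  assumes "prime p" "i \<le> M" "y \<in> carrierR i"
  shows "jndR p i (Suc M) y = jndR p M (Suc M) (jndR p i M y)"
proof (rule mark_eq[OF assms(1) jnd_carrier jnd_carrier])
  show "i \<le> Suc M" "M \<le> Suc M" using assms by auto
  show "\<forall>t\<le>Suc M. markR p (Suc M) (jndR p i (Suc M) y) t = markR p (Suc M) (jndR p M (Suc M) (jndR p i M y)) t"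
  proof (intro allI impI)
    fix t assume t: "t \<le> Suc M"
    have L: "markR p (Suc M) (jndR p i (Suc M) y) t = psi p i (Suc M) y t"
      using assms t by (simp add: markR_jnd)
    have R: "markR p (Suc M) (jndR p M (Suc M) (jndR p i M y)) t = psi p M (Suc M) (jndR p i M y) t"
      using assms t by (simp add: markR_jnd)
    show "markR p (Suc M) (jndR p i (Suc M) y) t = markR p (Suc M) (jndR p M (Suc M) (jndR p i M y)) t"
    proof (cases "t \<le> M")
      case True
      have "psi p M (Suc M) (jndR p i M y) t = (psi p i M y t) ^ p"
        using True assms by (simp add: psi_def markR_jnd)
      moreover have "psi p i (Suc M) y t = (psi p i M y t) ^ p"
      proof (cases "t \<le> i")
        case True then show ?thesis using assms
          by (simp add: psi_def power_mult[symmetric] Suc_diff_le mult.commute)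
      next
        case False then show ?thesis using assms \<open>t \<le> M\<close>
          by (simp add: psi_def power_mult[symmetric] Suc_diff_le mult.commute)
      qed
      ultimately show ?thesis using L R by simp
    next
      case False
      then have tM: "t = Suc M" using t by simp
      have "psi p M (Suc M) (jndR p i M y) t = jndR p i M y M"
        using tM by (simp add: psi_def)
      also have "\<dots> = psi p i M y M" using assms by (simp add: jnd_top)
      also have "\<dots> = y i" using assms by (cases "M = i") (auto simp: psi_def markR_top)
      finally show ?thesis using L R tM assms by (simp add: psi_def)
    qed
  qed
qed

definition constR :: "nat \<Rightarrow> int \<Rightarrow> elt" where "constR k d = (\<lambda>i. if i = k then d else 0)"

lemma constR_carrier: "constR k d \<in> carrierR k" by (simp add: constR_def carrierR_def)

lemma markR_const: "t \<le> k \<Longrightarrow> markR p k (constR k d) t = d"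
proof -
  assume "t \<le> k"
  then have "{t..k} = insert k {t..<k}" by auto
  then show ?thesis unfolding markR_def constR_def by simp
qed

lemma markR_mul_const: "t \<le> k \<Longrightarrow> markR p k (mulR p k (constR k d) x) t = d * markR p k x t"
  by (simp add: markR_mul markR_const)

definition Tcomp :: "nat \<Rightarrow> int \<Rightarrow> nat \<Rightarrow> nat \<Rightarrow> elt set" where
  "Tcomp p q c m = {x \<in> carrierR m. \<forall>t \<le> min m c. q dvd markR p m x t}"

definition Tlist :: "nat \<Rightarrow> int \<Rightarrow> nat \<Rightarrow> nat \<Rightarrow> elt set list" where
  "Tlist p q c n = map (Tcomp p q c) [0..<Suc n]"

lemma Tlist_nth: "m \<le> n \<Longrightarrow> Tlist p q c n ! m = Tcomp p q c m"
  by (simp add: Tlist_def nth_append del: upt_Suc)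

lemma Tlist_len: "length (Tlist p q c n) = Suc n"
  by (simp add: Tlist_def)

lemma zero_carrier: "zeroR \<in> carrierR k" by (simp add: zeroR_def carrierR_def)

lemma markR_zero: "markR p k zeroR t = 0" by (simp add: markR_def zeroR_def)

lemma markR_add: "markR p k (addR x y) t = markR p k x t + markR p k y t"
  using markR_lin[of p k 1 x 1 y t] by (simp add: addR_def)

lemma markR_neg: "markR p k (negR x) t = - markR p k x t"
  using markR_lin[of p k "-1" x 0 x t] by (simp add: negR_def)

lemma T_ideal:
  assumes "prime p"
  shows "is_ideal_R p m (Tcomp p q c m)"
  unfolding is_ideal_R_def
proof (intro conjI ballI)
  show "Tcomp p q c m \<subseteq> carrierR m" by (auto simp: Tcomp_def)
  show "zeroR \<in> Tcomp p q c m" by (simp add: Tcomp_def zero_carrier markR_zero)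
  fix x assume x: "x \<in> Tcomp p q c m"
  {
    fix y assume y: "y \<in> Tcomp p q c m"
    show "addR x y \<in> Tcomp p q c m" using x y
      by (auto simp: Tcomp_def markR_add) (auto simp: carrierR_def addR_def)
  }
  show "negR x \<in> Tcomp p q c m" using x
      by (auto simp: Tcomp_def markR_neg) (auto simp: carrierR_def negR_def)
next
  fix a x assume "a \<in> carrierR m" "x \<in> Tcomp p q c m"
  then show "mulR p m a x \<in> Tcomp p q c m"
    by (auto simp: Tcomp_def markR_mul mulR_carrier)
qed

lemma T_TF:
  assumes "prime p"
  shows "is_TF_ideal p n (Tlist p q c n)"
  unfolding is_TF_ideal_def
proof (intro conjI allI impI ballI)
  show "length (Tlist p q c n) = Suc n" by (rule Tlist_len)
  fix k assume "k \<le> n" then show "is_ideal_R p k (Tlist p q c n ! k)"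
    using T_ideal[OF assms] by (simp add: Tlist_nth)
next
  fix k assume k: "k \<in> {1..n}"
  then obtain j where kj: "k = Suc j" and jn: "j < n" by (cases k) auto
  have nth: "Tlist p q c n ! k = Tcomp p q c (Suc j)" "Tlist p q c n ! (k - 1) = Tcomp p q c j"
    using kj jn by (auto simp: Tlist_nth)
  show "indR (k - 1) k ` (Tlist p q c n ! (k - 1)) \<subseteq> Tlist p q c n ! k"
  proof
    fix y assume "y \<in> indR (k - 1) k ` (Tlist p q c n ! (k - 1))"
    then obtain x where y: "y = x" and x: "x \<in> Tcomp p q c j" using nth by (auto simp: indR_def)
    have xc: "x \<in> carrierR j" using x by (simp add: Tcomp_def)
    have "x \<in> carrierR (Suc j)" using xc by (simp add: carrierR_def)
    moreover have "q dvd markR p (Suc j) x t" if "t \<le> min (Suc j) c" for t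
    proof (cases "t \<le> j")
      case True then show ?thesis using x that by (auto simp: Tcomp_def markR_ind[OF xc])
    next
      case False then have "t = Suc j" using that by simp
      then show ?thesis using xc by (simp add: markR_top carrierR_def)
    qed
    ultimately show "y \<in> Tlist p q c n ! k" using y nth by (simp add: Tcomp_def)
  qed
  show "resR p k (k - 1) ` (Tlist p q c n ! k) \<subseteq> Tlist p q c n ! (k - 1)"
    using nth kj by (auto simp: Tcomp_def resR_carrier markR_res)
  show "jndR p (k - 1) k ` (Tlist p q c n ! (k - 1)) \<subseteq> Tlist p q c n ! k"
  proof
    fix y assume "y \<in> jndR p (k - 1) k ` (Tlist p q c n ! (k - 1))"
    then obtain x where y: "y = jndR p j (Suc j) x" and x: "x \<in> Tcomp p q c j" using nth kj by auto
    have "q dvd markR p (Suc j) y t" if "t \<le> min (Suc j) c" for t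
    proof (cases "t \<le> j")
      case True
      then have "q dvd markR p j x t" using x that by (auto simp: Tcomp_def)
      then show ?thesis using True assms prime_gt_0_nat[OF assms] y
        by (simp add: markR_jnd psi_def dvd_pow_pos)
    next
      case False then have "t = Suc j" using that by simp
      then have "markR p (Suc j) y t = markR p j x j"
        using y assms by (simp add: markR_top jndR_def)
      moreover have "q dvd markR p j x j" using x that \<open>t = Suc j\<close> by (auto simp: Tcomp_def)
      ultimately show ?thesis by simp
    qed
    then show "y \<in> Tlist p q c n ! k" using y nth by (simp add: Tcomp_def jnd_carrier)
  qed
qed



lemma prod_dvd_q:
  fixes q a b :: int
  assumes "q = 0 \<or> prime q" "q dvd a * b"
  shows "q dvd a \<or> q dvd b"
  using assms by (auto dest: prime_dvd_multD)

lemma T_prime: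
  assumes p: "prime p" and q: "q = 0 \<or> prime q"
  shows "is_prime_TF p n (Tlist p q c n)"
  unfolding is_prime_TF_def
proof (intro conjI allI impI)
  show "is_TF_ideal p n (Tlist p q c n)" by (rule T_TF[OF p])
  show "Tlist p q c n ! 0 \<noteq> carrierR 0"
  proof
    assume "Tlist p q c n ! 0 = carrierR 0"
    then have "constR 0 1 \<in> Tcomp p q c 0" using constR_carrier by (simp add: Tlist_nth)
    then have "q dvd 1" by (auto simp: Tcomp_def markR_const)
    then show False using q by (metis dvd_0_left zero_neq_one not_prime_unit)
  qed
  fix k l a b
  assume lk: "l \<le> k" and kn: "k \<le> n" and a: "a \<in> carrierR k" and b: "b \<in> carrierR l"
    and H: "\<forall>i\<le>k. \<forall>j\<le>l. mulR p (max i j) (jndR p i (max i j) (resR p k i a))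
                              (jndR p j (max i j) (resR p l j b)) \<in> Tlist p q c n ! max i j"
  show "a \<in> Tlist p q c n ! k \<or> b \<in> Tlist p q c n ! l"
  proof (rule ccontr)
    assume "\<not> ?thesis"
    then have na: "a \<notin> Tcomp p q c k" and nb: "b \<notin> Tcomp p q c l" using lk kn by (auto simp: Tlist_nth)
    obtain i where i: "i \<le> min k c" "\<not> q dvd markR p k a i" using na a by (auto simp: Tcomp_def)
    obtain j where j: "j \<le> min l c" "\<not> q dvd markR p l b j" using nb b by (auto simp: Tcomp_def)
    let ?M = "max i j"
    have M: "?M \<le> n" "?M \<le> min ?M c" using i j lk kn by auto
    have ik: "i \<le> k" and jl: "j \<le> l" using i j by auto
    have "mulR p ?M (jndR p i ?M (resR p k i a)) (jndR p j ?M (resR p l j b)) \<in> Tlist p q c n ! ?M"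
      using H ik jl by blast
    then have "mulR p ?M (jndR p i ?M (resR p k i a)) (jndR p j ?M (resR p l j b)) \<in> Tcomp p q c ?M"
      using M(1) by (simp add: Tlist_nth)
    then have "q dvd markR p ?M (mulR p ?M (jndR p i ?M (resR p k i a)) (jndR p j ?M (resR p l j b))) ?M"
      using M(2) unfolding Tcomp_def by blast
    also have "markR p ?M (mulR p ?M (jndR p i ?M (resR p k i a)) (jndR p j ?M (resR p l j b))) ?M
      = resR p k i a i * resR p l j b j"
      by (simp only: markR_mul[OF order_refl] markR_jnd_top[OF p max.cobounded1] markR_jnd_top[OF p max.cobounded2])
    also have "resR p k i a i = markR p k a i"
      using markR_res[of i i k p a] i by (simp add: markR_top)
    also have "resR p l j b j = markR p l b j"
      using markR_res[of j j l p b] j by (simp add: markR_top)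
    finally show False using prod_dvd_q[OF q] i j by blast
  qed
qed

lemma prefix_prime:
  assumes "is_prime_TF p (Suc n) P"
  shows "is_prime_TF p n (butlast P)"
proof -
  have len: "length P = Suc (Suc n)" using assms by (simp add: is_prime_TF_def is_TF_ideal_def)
  have nth: "\<And>k. k \<le> n \<Longrightarrow> butlast P ! k = P ! k" using len by (simp add: nth_butlast)
  have A: "is_TF_ideal p (Suc n) P" "P ! 0 \<noteq> carrierR 0"
    "\<And>k l a b. l \<le> k \<Longrightarrow> k \<le> Suc n \<Longrightarrow> a \<in> carrierR k \<Longrightarrow> b \<in> carrierR l \<Longrightarrow>
          (\<forall>i\<le>k. \<forall>j\<le>l. mulR p (max i j) (jndR p i (max i j) (resR p k i a))
                              (jndR p j (max i j) (resR p l j b)) \<in> P ! max i j)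
          \<Longrightarrow> a \<in> P ! k \<or> b \<in> P ! l"
    using assms unfolding is_prime_TF_def by blast+
  have B: "\<forall>k\<le>Suc n. is_ideal_R p k (P ! k)"
    "\<forall>k\<in>{1..Suc n}. indR (k - 1) k ` (P ! (k - 1)) \<subseteq> P ! k
                  \<and> resR p k (k - 1) ` (P ! k) \<subseteq> P ! (k - 1)
                  \<and> jndR p (k - 1) k ` (P ! (k - 1)) \<subseteq> P ! k"
    using A(1) unfolding is_TF_ideal_def by blast+
  have "is_TF_ideal p n (butlast P)"
    unfolding is_TF_ideal_def
  proof (intro conjI allI impI ballI)
    show "length (butlast P) = Suc n" using len by simp
    fix k assume "k \<le> n" then show "is_ideal_R p k (butlast P ! k)" using B(1) nth by simp
  next
    fix k assume k: "k \<in> {1..n}"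
    then have e: "butlast P ! k = P ! k" "butlast P ! (k - 1) = P ! (k - 1)" using nth by auto
    have "k \<in> {1..Suc n}" using k by auto
    then show "indR (k - 1) k ` (butlast P ! (k - 1)) \<subseteq> butlast P ! k"
      "resR p k (k - 1) ` (butlast P ! k) \<subseteq> butlast P ! (k - 1)"
      "jndR p (k - 1) k ` (butlast P ! (k - 1)) \<subseteq> butlast P ! k"
      using B(2) e by auto
  qed
  moreover have "butlast P ! 0 \<noteq> carrierR 0" using A(2) nth by simp
  moreover have "\<forall>k l a b. l \<le> k \<longrightarrow> k \<le> n \<longrightarrow> a \<in> carrierR k \<longrightarrow> b \<in> carrierR l \<longrightarrow>
          (\<forall>i\<le>k. \<forall>j\<le>l. mulR p (max i j) (jndR p i (max i j) (resR p k i a))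
                              (jndR p j (max i j) (resR p l j b)) \<in> butlast P ! max i j)
          \<longrightarrow> a \<in> butlast P ! k \<or> b \<in> butlast P ! l"
  proof (intro allI impI)
    fix k l a b assume h: "l \<le> k" "k \<le> n" "a \<in> carrierR k" "b \<in> carrierR l"
      "\<forall>i\<le>k. \<forall>j\<le>l. mulR p (max i j) (jndR p i (max i j) (resR p k i a))
                              (jndR p j (max i j) (resR p l j b)) \<in> butlast P ! max i j"
    have "\<forall>i\<le>k. \<forall>j\<le>l. mulR p (max i j) (jndR p i (max i j) (resR p k i a))
                              (jndR p j (max i j) (resR p l j b)) \<in> P ! max i j"
    proof (intro allI impI)
      fix i j assume "i \<le> k" "j \<le> l"
      then show "mulR p (max i j) (jndR p i (max i j) (resR p k i a))
                              (jndR p j (max i j) (resR p l j b)) \<in> P ! max i j"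
        using h(5) nth[of "max i j"] h(1,2) by auto
    qed
    then have "a \<in> P ! k \<or> b \<in> P ! l" using A(3)[of l k a b] h by auto
    then show "a \<in> butlast P ! k \<or> b \<in> butlast P ! l" using nth h by auto
  qed
  ultimately show ?thesis unfolding is_prime_TF_def by blast
qed



lemma carrier0_const: "x \<in> carrierR 0 \<Longrightarrow> x = constR 0 (x 0)"
  by (auto simp: carrierR_def constR_def fun_eq_iff)

lemma mul0_const:
  assumes "prime p"
  shows "mulR p 0 (constR 0 u) (constR 0 v) = constR 0 (u * v)"
  by (rule mark_eq[OF assms mulR_carrier constR_carrier]) (auto simp: markR_mul markR_const)

lemma level0:
  assumes p: "prime p" and P: "is_prime_TF p n P"
  shows "\<exists>q. (q = 0 \<or> prime q) \<and> P ! 0 = Tcomp p q 0 0"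
proof -
  let ?I = "P ! 0"
  have id: "is_ideal_R p 0 ?I" using P by (simp add: is_prime_TF_def is_TF_ideal_def)
  have prp: "?I \<noteq> carrierR 0" using P by (simp add: is_prime_TF_def)
  have pr: "\<And>a b. a \<in> carrierR 0 \<Longrightarrow> b \<in> carrierR 0 \<Longrightarrow> mulR p 0 a b \<in> ?I \<Longrightarrow> a \<in> ?I \<or> b \<in> ?I"
  proof -
    fix a b assume a: "a \<in> carrierR 0" and b: "b \<in> carrierR 0" and ab: "mulR p 0 a b \<in> ?I"
    have "\<forall>k l a b. l \<le> k \<longrightarrow> k \<le> n \<longrightarrow> a \<in> carrierR k \<longrightarrow> b \<in> carrierR l \<longrightarrow>
          (\<forall>i\<le>k. \<forall>j\<le>l. mulR p (max i j) (jndR p i (max i j) (resR p k i a))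
                              (jndR p j (max i j) (resR p l j b)) \<in> P ! max i j)
          \<longrightarrow> a \<in> P ! k \<or> b \<in> P ! l" using P by (simp add: is_prime_TF_def)
    then have "(\<forall>i\<le>0. \<forall>j\<le>0. mulR p (max i j) (jndR p i (max i j) (resR p 0 i a))
                              (jndR p j (max i j) (resR p 0 j b)) \<in> P ! max i j)
          \<longrightarrow> a \<in> P ! 0 \<or> b \<in> P ! 0" using a b by blast
    moreover have "mulR p 0 (jndR p 0 0 (resR p 0 0 a)) (jndR p 0 0 (resR p 0 0 b)) = mulR p 0 a b"
      using a b p by (simp add: res_id jnd_id)
    ultimately show "a \<in> ?I \<or> b \<in> ?I" using ab by simp
  qed
  define S where "S = {u. constR 0 u \<in> ?I}"
  have memI: "\<And>x. x \<in> carrierR 0 \<Longrightarrow> x \<in> ?I \<longleftrightarrow> x 0 \<in> S"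
    using carrier0_const S_def by (metis (mono_tags, lifting) mem_Collect_eq)
  have Isub: "?I \<subseteq> carrierR 0" using id by (simp add: is_ideal_R_def)
  have S0: "0 \<in> S" using id by (simp add: S_def is_ideal_R_def zeroR_def constR_def)
  have Smul: "\<And>u v. v \<in> S \<Longrightarrow> u * v \<in> S"
  proof -
    fix u v assume "v \<in> S"
    then have "mulR p 0 (constR 0 u) (constR 0 v) \<in> ?I" using id constR_carrier
      by (simp add: S_def is_ideal_R_def)
    then show "u * v \<in> S" using mul0_const[OF p] by (simp add: S_def)
  qed
  have Sadd: "\<And>u v. u \<in> S \<Longrightarrow> v \<in> S \<Longrightarrow> u + v \<in> S"
  proof -
    fix u v assume "u \<in> S" "v \<in> S"
    then have "addR (constR 0 u) (constR 0 v) \<in> ?I" using id by (simp add: S_def is_ideal_R_def)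
    moreover have "addR (constR 0 u) (constR 0 v) = constR 0 (u + v)"
      by (auto simp: addR_def constR_def)
    ultimately show "u + v \<in> S" by (simp add: S_def)
  qed
  have Spr: "\<And>u v. u * v \<in> S \<Longrightarrow> u \<in> S \<or> v \<in> S"
    using pr constR_carrier mul0_const[OF p] by (simp add: S_def)
  show ?thesis
  proof (cases "S = {0}")
    case True
    have "?I = Tcomp p 0 0 0"
      using True memI Isub by (auto simp: Tcomp_def markR_top)
    then show ?thesis by auto
  next
    case False
    then obtain u where u: "u \<in> S" "u \<noteq> 0" using S0 by auto
    have "(- 1) * u \<in> S" using Smul u by blast
    then have "\<exists>m::nat. m > 0 \<and> int m \<in> S" using u
      by (cases "u > 0") (rule exI[of _ "nat u"], simp, rule exI[of _ "nat (-u)"], simp)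
    define g where "g = int (LEAST m::nat. m > 0 \<and> int m \<in> S)"
    have g: "g > 0" "g \<in> S" using LeastI_ex[OF \<open>\<exists>m::nat. m > 0 \<and> int m \<in> S\<close>] by (auto simp: g_def)
    have gmin: "\<And>v. v \<in> S \<Longrightarrow> 0 < v \<Longrightarrow> g \<le> v"
    proof -
      fix v assume "v \<in> S" "0 < v"
      then have "(LEAST m::nat. m > 0 \<and> int m \<in> S) \<le> nat v" by (intro Least_le) simp
      then show "g \<le> v" using \<open>0 < v\<close> by (simp add: g_def)
    qed
    have Sdvd: "\<And>v. v \<in> S \<longleftrightarrow> g dvd v"
    proof
      fix v assume v: "v \<in> S"
      have "v + (- (v div g)) * g \<in> S" using Sadd Smul v g by blast
      moreover have "v + (- (v div g)) * g = v mod g" by (simp add: minus_div_mult_eq_mod[symmetric])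
      ultimately have "v mod g \<in> S" by simp
      moreover have "0 \<le> v mod g" "v mod g < g" using g by auto
      ultimately have "v mod g = 0" using gmin by force
      then show "g dvd v" by auto
    next
      fix v assume "g dvd v" then obtain w where "v = g * w" by (auto elim!: dvdE)
      then have "v = w * g" by simp
      then show "v \<in> S" using Smul g by simp
    qed
    have "g \<noteq> 1"
    proof
      assume "g = 1"
      then have "\<forall>x\<in>carrierR 0. x \<in> ?I" using memI Sdvd by simp
      then show False using prp Isub by blast
    qed
    have "prime g"
      unfolding prime_int_iff
    proof (intro conjI allI impI)
      show "1 < g" using g \<open>g \<noteq> 1\<close> by simp
      fix m assume m: "0 \<le> m \<and> m dvd g"
      then obtain d where gd: "g = m * d" by (auto elim!: dvdE)
      then have m0: "m > 0" and d0: "d > 0" using g m by (auto simp: zero_less_mult_iff)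
      have "m \<in> S \<or> d \<in> S" using Spr gd g by simp
      then show "m = 1 \<or> m = g"
      proof
        assume "m \<in> S" then have "g dvd m" using Sdvd by simp
        then show ?thesis using m g by (simp add: zdvd_antisym_nonneg)
      next
        assume "d \<in> S" then have "g dvd d" using Sdvd by simp
        moreover have "d dvd g" using gd by simp
        ultimately have "d = g" using g d0 by (simp add: zdvd_antisym_nonneg)
        then have "m * g = 1 * g" using gd by simp
        then show ?thesis using g by (simp only: mult_right_cancel) simp
      qed
    qed
    moreover have "?I = Tcomp p g 0 0"
      using memI Isub Sdvd by (auto simp: Tcomp_def markR_top)
    ultimately show ?thesis by auto
  qed
qed



definition basisR :: "nat \<Rightarrow> elt" where "basisR s = (\<lambda>i. if i = s then 1 else 0)"

lemma markR_basis: "markR p k (basisR s) t = (if t \<le> s \<and> s \<le> k then int p ^ (k - s) else 0)"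
proof (cases "t \<le> s \<and> s \<le> k")
  case True
  then have "{t..k} = insert s ({t..k} - {s})" by auto
  then show ?thesis using True unfolding markR_def basisR_def
    by (simp add: sum.remove[of "{t..k}" s] )
next
  case False
  then show ?thesis unfolding markR_def basisR_def by (auto intro!: sum.neutral)
qed

lemma markR_diff3: "markR p k (\<lambda>i. a i - s * y i - w * z i) t = markR p k a t - s * markR p k y t - w * markR p k z t"
  unfolding markR_def by (simp add: sum_subtractf sum_distrib_left algebra_simps sum.distrib)

definition epsR :: "nat \<Rightarrow> nat \<Rightarrow> elt" where
  "epsR p n = (\<lambda>i. int p * basisR n i + (-1) * basisR (n - 1) i)"

lemma markR_eps: "t < n \<Longrightarrow> markR p n (epsR p n) t = 0"
  unfolding epsR_def by (simp only: markR_lin markR_basis) (auto simp: Suc_diff_le)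

lemma eps_carrier: "epsR p n \<in> carrierR n"
  by (auto simp: epsR_def basisR_def carrierR_def)

lemma eps_top: "0 < n \<Longrightarrow> epsR p n n = int p"
  by (auto simp: epsR_def basisR_def)

lemma ideal_add: "is_ideal_R p k I \<Longrightarrow> x \<in> I \<Longrightarrow> y \<in> I \<Longrightarrow> addR x y \<in> I"
  by (simp add: is_ideal_R_def)
lemma ideal_mul: "is_ideal_R p k I \<Longrightarrow> a \<in> carrierR k \<Longrightarrow> x \<in> I \<Longrightarrow> mulR p k a x \<in> I"
  by (simp add: is_ideal_R_def)
lemma ideal_neg: "is_ideal_R p k I \<Longrightarrow> x \<in> I \<Longrightarrow> negR x \<in> I"
  by (simp add: is_ideal_R_def)
lemma ideal_carrier: "is_ideal_R p k I \<Longrightarrow> x \<in> I \<Longrightarrow> x \<in> carrierR k"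
  by (auto simp: is_ideal_R_def)

lemma lift:
  assumes p: "prime p" and cn: "c \<le> n" and hq: "\<forall>m. q dvd int p * m \<longrightarrow> q dvd m"
    and J: "is_ideal_R p (Suc n) J" "Tcomp p q c n \<subseteq> J" "jndR p n (Suc n) ` Tcomp p q c n \<subseteq> J"
    and a: "a \<in> carrierR (Suc n)" "\<forall>t\<le>c. q dvd markR p (Suc n) a t"
    and aw: "a (Suc n) = s * int p + w * q" and cs: "c < n \<or> s = 0"
  shows "a \<in> J"
proof -
  define \<psi> where "\<psi> = (if c < n then epsR p n else zeroR)"
  have \<psi>c: "\<psi> \<in> carrierR n" using eps_carrier zero_carrier by (simp add: \<psi>_def)
  have \<psi>m: "\<And>t. t \<le> c \<Longrightarrow> markR p n \<psi> t = 0"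
    using markR_eps markR_zero cn by (auto simp: \<psi>_def)
  have \<psi>T: "\<psi> \<in> Tcomp p q c n" using \<psi>c \<psi>m by (simp add: Tcomp_def)
  have qT: "constR n q \<in> Tcomp p q c n" using constR_carrier by (simp add: Tcomp_def markR_const)
  define j\<psi> where "j\<psi> = jndR p n (Suc n) \<psi>"
  define jq where "jq = jndR p n (Suc n) (constR n q)"
  have jJ: "j\<psi> \<in> J" "jq \<in> J" using J(3) \<psi>T qT by (auto simp: j\<psi>_def jq_def)
  have jc: "j\<psi> \<in> carrierR (Suc n)" "jq \<in> carrierR (Suc n)" by (auto simp: j\<psi>_def jq_def jnd_carrier)
  define z where "z = (\<lambda>i. a i - s * j\<psi> i - w * jq i)"
  have sps: "s * \<psi> n = s * int p"
    using cs eps_top by (cases "c < n") (auto simp: \<psi>_def)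
  have "z (Suc n) = a (Suc n) - s * \<psi> n - w * q"
    by (simp add: z_def j\<psi>_def jq_def jndR_def constR_def)
  also have "\<dots> = 0" by (simp only: aw sps)
  finally have "z (Suc n) = 0" .
  then have zc: "z \<in> carrierR n"
  proof -
    assume z0: "z (Suc n) = 0"
    show ?thesis unfolding carrierR_def
    proof (intro CollectI allI impI)
      fix i assume "n < i"
      then have "i = Suc n \<or> Suc n < i" by auto
      then show "z i = 0"
        using z0 a(1) jc by (auto simp: carrierR_def z_def)
    qed
  qed
  have "q dvd markR p n z t" if t: "t \<le> c" for t
  proof -
    have "markR p (Suc n) j\<psi> t = 0"
      using t cn p \<psi>m[OF t] prime_gt_0_nat[OF p] by (simp add: j\<psi>_def markR_jnd psi_def)
    moreover have "markR p (Suc n) jq t = q ^ p"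
      using t cn p by (simp add: jq_def markR_jnd psi_def markR_const)
    ultimately have "markR p (Suc n) z t = markR p (Suc n) a t - w * q ^ p"
      unfolding z_def markR_diff3 by simp
    moreover have "q dvd w * q ^ p" using prime_gt_0_nat[OF p]
      by (simp add: dvd_pow_pos)
    ultimately have "q dvd markR p (Suc n) z t" using a(2) t by simp
    then have "q dvd int p * markR p n z t" using markR_ind[OF zc] t cn by simp
    then show ?thesis using hq by blast
  qed
  then have "z \<in> Tcomp p q c n" using zc by (simp add: Tcomp_def)
  then have zJ: "z \<in> J" using J(2) by blast
  have zc': "z \<in> carrierR (Suc n)" using zc by (simp add: carrierR_def)
  have "a = addR z (addR (mulR p (Suc n) (constR (Suc n) s) j\<psi>) (mulR p (Suc n) (constR (Suc n) w) jq))"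
  proof (rule mark_eq[OF p a(1)])
    show "addR z (addR (mulR p (Suc n) (constR (Suc n) s) j\<psi>) (mulR p (Suc n) (constR (Suc n) w) jq)) \<in> carrierR (Suc n)"
      using zc' mulR_carrier[of p "Suc n"] by (auto simp: carrierR_def addR_def)
    show "\<forall>t\<le>Suc n. markR p (Suc n) a t = markR p (Suc n) (addR z (addR (mulR p (Suc n) (constR (Suc n) s) j\<psi>) (mulR p (Suc n) (constR (Suc n) w) jq))) t"
      by (auto simp: markR_add markR_mul_const z_def markR_diff3)
  qed
  also have "\<dots> \<in> J"
    using J(1) zJ jJ constR_carrier by (intro ideal_add ideal_mul) auto
  finally show ?thesis .
qed



lemma mark_cong:
  assumes "t \<le> k"
  shows "int p dvd markR p k x t - x k"
  using assms
proof (induction "k - t" arbitrary: t)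
  case 0 then show ?case by (simp add: markR_top)
next
  case (Suc d)
  then have tk: "t < k" by simp
  have "int p dvd markR p k x (Suc t) - x k" using Suc.hyps Suc.prems by simp
  moreover have "int p dvd x t * int p ^ (k - t)" using tk by (simp add: dvd_pow_pos)
  then have "int p dvd x t * int p ^ (k - t) + (markR p k x (Suc t) - x k)"
    using \<open>int p dvd markR p k x (Suc t) - x k\<close> by (rule dvd_add)
  then show ?case using markR_step[OF tk, of p x] by (simp add: algebra_simps)
qed

lemma mul_const_vec:
  assumes "prime p" "x \<in> carrierR k"
  shows "mulR p k (constR k c) x = (\<lambda>i. c * x i)"
proof (rule mark_eq[OF assms(1) mulR_carrier])
  show "(\<lambda>i. c * x i) \<in> carrierR k" using assms(2) by (simp add: carrierR_def)
  show "\<forall>t\<le>k. markR p k (mulR p k (constR k c) x) t = markR p k (\<lambda>i. c * x i) t"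
    using markR_lin[of p k c x 0 x] by (simp add: markR_mul_const)
qed

lemma Tcomp_same: "k \<le> c \<Longrightarrow> k \<le> c' \<Longrightarrow> Tcomp p q c k = Tcomp p q c' k"
  by (simp add: Tcomp_def min_absorb1)

lemma Tlist_same: "n \<le> c \<Longrightarrow> n \<le> c' \<Longrightarrow> Tlist p q c n = Tlist p q c' n"
  unfolding Tlist_def by (rule map_cong[OF refl]) (auto intro!: Tcomp_same)

lemma Tlist_Suc: "Tlist p q c (Suc n) = Tlist p q c n @ [Tcomp p q c (Suc n)]"
  by (simp add: Tlist_def)

lemma P_snoc: "length P = Suc (Suc n) \<Longrightarrow> P = butlast P @ [P ! Suc n]"
proof -
  assume l: "length P = Suc (Suc n)"
  then have ne: "P \<noteq> []" by auto
  then have "P = butlast P @ [last P]" by simp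
  moreover have "last P = P ! Suc n" using ne l by (simp add: last_conv_nth)
  ultimately show ?thesis by simp
qed

lemma step_facts:
  assumes "is_prime_TF p (Suc n) P"
  shows "is_ideal_R p (Suc n) (P ! Suc n)" "P ! n \<subseteq> P ! Suc n"
    "jndR p n (Suc n) ` (P ! n) \<subseteq> P ! Suc n" "resR p (Suc n) n ` (P ! Suc n) \<subseteq> P ! n"
    "length P = Suc (Suc n)"
proof -
  have TF: "is_TF_ideal p (Suc n) P" using assms by (simp add: is_prime_TF_def)
  then show "is_ideal_R p (Suc n) (P ! Suc n)" "length P = Suc (Suc n)" by (auto simp: is_TF_ideal_def)
  have all: "\<forall>k\<in>{1..Suc n}. indR (k - 1) k ` (P ! (k - 1)) \<subseteq> P ! k
                  \<and> resR p k (k - 1) ` (P ! k) \<subseteq> P ! (k - 1)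
                  \<and> jndR p (k - 1) k ` (P ! (k - 1)) \<subseteq> P ! k"
    using TF unfolding is_TF_ideal_def by blast
  have "Suc n \<in> {1..Suc n}" by simp
  from bspec[OF all this] have "indR n (Suc n) ` (P ! n) \<subseteq> P ! Suc n \<and> resR p (Suc n) n ` (P ! Suc n) \<subseteq> P ! n
     \<and> jndR p n (Suc n) ` (P ! n) \<subseteq> P ! Suc n" by simp
  then show "P ! n \<subseteq> P ! Suc n" "jndR p n (Suc n) ` (P ! n) \<subseteq> P ! Suc n"
    "resR p (Suc n) n ` (P ! Suc n) \<subseteq> P ! n" by (auto simp: indR_def)
qed

lemma upper:
  assumes "c \<le> n" "is_ideal_R p (Suc n) I" "resR p (Suc n) n ` I \<subseteq> Tcomp p q c n"
  shows "I \<subseteq> Tcomp p q c (Suc n)"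
proof
  fix x assume x: "x \<in> I"
  have xc: "x \<in> carrierR (Suc n)" using ideal_carrier[OF assms(2) x] .
  have "resR p (Suc n) n x \<in> Tcomp p q c n" using assms(3) x by blast
  then have "\<forall>t\<le>c. q dvd markR p (Suc n) x t" using assms(1) by (auto simp: Tcomp_def markR_res)
  then show "x \<in> Tcomp p q c (Suc n)" using xc assms(1) by (auto simp: Tcomp_def)
qed

lemma q_ndvd_p:
  assumes "prime p" "prime q" "q \<noteq> int p"
  shows "\<not> q dvd int p"
proof
  assume "q dvd int p"
  moreover have "prime (int p)" using assms(1) by simp
  ultimately have "q = int p" using primes_dvd_imp_eq[OF assms(2)] by blast
  then show False using assms(3) by simp
qed

lemma hq_lemma:
  assumes "prime p" "q = 0 \<or> (prime q \<and> q \<noteq> int p)"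
  shows "\<forall>m. q dvd int p * m \<longrightarrow> q dvd m"
proof (intro allI impI)
  fix m assume d: "q dvd int p * m"
  show "q dvd m"
  proof (cases "q = 0")
    case True then show ?thesis using d assms(1) prime_gt_0_nat[OF assms(1)] by simp
  next
    case False
    then have q: "prime q" "q \<noteq> int p" using assms(2) by auto
    have "\<not> q dvd int p" using q_ndvd_p[OF assms(1) q] .
    then show ?thesis using d q(1) by (auto dest: prime_dvd_multD)
  qed
qed

lemma caseA:
  assumes p: "prime p" and q: "q = 0 \<or> (prime q \<and> q \<noteq> int p)" and cn: "c < n"
    and I: "is_ideal_R p (Suc n) I" "Tcomp p q c n \<subseteq> I" "jndR p n (Suc n) ` Tcomp p q c n \<subseteq> I"
       "resR p (Suc n) n ` I \<subseteq> Tcomp p q c n"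
  shows "I = Tcomp p q c (Suc n)"
proof
  show "I \<subseteq> Tcomp p q c (Suc n)" using upper[OF _ I(1) I(4)] cn by simp
  show "Tcomp p q c (Suc n) \<subseteq> I"
  proof
    fix a assume a: "a \<in> Tcomp p q c (Suc n)"
    then have ac: "a \<in> carrierR (Suc n)" and am: "\<forall>t\<le>c. q dvd markR p (Suc n) a t"
      using cn by (auto simp: Tcomp_def)
    have "\<exists>s w. a (Suc n) = s * int p + w * q"
    proof (cases "q = 0")
      case True
      then have "markR p (Suc n) a 0 = 0" using am by auto
      then have "int p dvd a (Suc n)" using mark_cong[of 0 "Suc n" p a] by simp
      then obtain s where "a (Suc n) = int p * s" by (auto elim!: dvdE)
      then show ?thesis by (intro exI[of _ s] exI[of _ 0]) simp
    next
      case False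
      then have qq: "prime q" "q \<noteq> int p" using q by auto
      have "\<not> q dvd int p" using q_ndvd_p[OF p qq] .
      then have "coprime q (int p)" using qq(1) by (simp add: prime_imp_coprime)
      then have "gcd (int p) q = 1" by (simp add: coprime_iff_gcd_eq_1 gcd.commute)
      then obtain u v where "u * int p + v * q = 1" using bezout_int[of "int p" q] by auto
      then have "a (Suc n) * (u * int p + v * q) = a (Suc n)" by simp
      then have "a (Suc n) = (a (Suc n) * u) * int p + (a (Suc n) * v) * q"
        by (simp add: algebra_simps)
      then show ?thesis by blast
    qed
    then obtain s w where "a (Suc n) = s * int p + w * q" by blast
    then show "a \<in> I"
      by (rule lift[OF p less_imp_le[OF cn] hq_lemma[OF p q] I(1,2,3) ac am _ disjI1[OF cn]])
  qed
qed

lemma caseC: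
  assumes p: "prime p" and q: "prime q" "q \<noteq> int p"
    and I: "is_ideal_R p (Suc n) I" "Tcomp p q n n \<subseteq> I" "jndR p n (Suc n) ` Tcomp p q n n \<subseteq> I"
       "resR p (Suc n) n ` I \<subseteq> Tcomp p q n n"
  shows "I = Tcomp p q n (Suc n) \<or> I = Tcomp p q (Suc n) (Suc n)"
proof -
  have up: "I \<subseteq> Tcomp p q n (Suc n)" using upper[OF _ I(1) I(4)] by simp
  have low: "Tcomp p q (Suc n) (Suc n) \<subseteq> I"
  proof
    fix a assume a: "a \<in> Tcomp p q (Suc n) (Suc n)"
    then have ac: "a \<in> carrierR (Suc n)" and am: "\<forall>t\<le>Suc n. q dvd markR p (Suc n) a t"
      by (auto simp: Tcomp_def)
    then have "q dvd a (Suc n)" using markR_top[of p "Suc n" a] by auto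
    then obtain w where "a (Suc n) = q * w" by (auto elim!: dvdE)
    then have "a (Suc n) = 0 * int p + w * q" by simp
    then show "a \<in> I" using lift[OF p order_refl hq_lemma[OF p] I(1,2,3) ac] am q by auto
  qed
  show ?thesis
  proof (cases "I \<subseteq> Tcomp p q (Suc n) (Suc n)")
    case True then show ?thesis using low by blast
  next
    case False
    then obtain x where x: "x \<in> I" "x \<notin> Tcomp p q (Suc n) (Suc n)" by blast
    have xc: "x \<in> carrierR (Suc n)" using ideal_carrier[OF I(1) x(1)] .
    have xm: "\<forall>t\<le>n. q dvd markR p (Suc n) x t" using up x by (auto simp: Tcomp_def)
    have "\<not> q dvd x (Suc n)"
    proof
      assume "q dvd x (Suc n)"
      then have "\<forall>t\<le>Suc n. q dvd markR p (Suc n) x t" using xm markR_top[of p "Suc n" x]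
        by (metis le_Suc_eq)
      then show False using x(2) xc by (simp add: Tcomp_def)
    qed
    then have "coprime (x (Suc n)) q" using q(1)
      by (simp add: prime_imp_coprime coprime_commute)
    then obtain u where u: "[x (Suc n) * u = 1] (mod q)" using cong_solve_coprime_int by blast
    have "Tcomp p q n (Suc n) \<subseteq> I"
    proof
      fix y assume y: "y \<in> Tcomp p q n (Suc n)"
      then have yc: "y \<in> carrierR (Suc n)" and ym: "\<forall>t\<le>n. q dvd markR p (Suc n) y t"
        by (auto simp: Tcomp_def)
      define v where "v = u * y (Suc n)"
      define y' where "y' = (\<lambda>i. 1 * y i + (- v) * x i)"
      have y'c: "y' \<in> carrierR (Suc n)" using yc xc by (simp add: carrierR_def y'_def)
      have "q dvd markR p (Suc n) y' t" if t: "t \<le> Suc n" for t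
      proof (cases "t \<le> n")
        case True
        then have "q dvd 1 * markR p (Suc n) y t + (- v) * markR p (Suc n) x t" using xm ym by simp
        then show ?thesis by (simp only: y'_def markR_lin)
      next
        case False then have "t = Suc n" using t by simp
        moreover have "[y (Suc n) - v * x (Suc n) = y (Suc n) - y (Suc n) * 1] (mod q)"
        proof -
          have "[y (Suc n) * (x (Suc n) * u) = y (Suc n) * 1] (mod q)" using u by (rule cong_scalar_left)
          then have "[v * x (Suc n) = y (Suc n) * 1] (mod q)" by (simp add: v_def ac_simps)
          then show ?thesis by (intro cong_diff cong_refl)
        qed
        ultimately show ?thesis
          by (simp add: y'_def markR_lin markR_top cong_0_iff)
      qed
      then have "y' \<in> I" using low y'c by (auto simp: Tcomp_def)
      moreover have "y = addR y' (mulR p (Suc n) (constR (Suc n) v) x)"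
        using mul_const_vec[OF p xc] by (simp add: addR_def y'_def)
      ultimately show "y \<in> I" using ideal_add[OF I(1) _ ideal_mul[OF I(1) constR_carrier x(1)]] by simp
    qed
    then show ?thesis using up by blast
  qed
qed



lemma prime_cond:
  assumes "is_prime_TF p n P" "l \<le> k" "k \<le> n" "a \<in> carrierR k" "b \<in> carrierR l"
    "\<And>i j. i \<le> k \<Longrightarrow> j \<le> l \<Longrightarrow> mulR p (max i j) (jndR p i (max i j) (resR p k i a))
                              (jndR p j (max i j) (resR p l j b)) \<in> P ! max i j"
  shows "a \<in> P ! k \<or> b \<in> P ! l"
  using assms unfolding is_prime_TF_def by blast

lemma prefix_nth:
  assumes "length P = Suc (Suc n)" "butlast P = Tlist p q c n" "k \<le> n"
  shows "P ! k = Tcomp p q c k"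
proof -
  have "butlast P ! k = P ! k" by (rule nth_butlast) (use assms Tlist_len in simp)
  then show ?thesis using assms by (metis Tlist_nth)
qed

lemma markR_eps_top: "markR p (Suc n) (epsR p (Suc n)) (Suc n) = int p"
  by (simp add: markR_top eps_top)

lemma caseB:
  assumes p: "prime p" and P: "is_prime_TF p (Suc n) P" and pre: "butlast P = Tlist p 0 n n"
  shows "P ! Suc n = Tcomp p 0 n (Suc n) \<or> P ! Suc n = Tcomp p 0 (Suc n) (Suc n)"
proof -
  let ?I = "P ! Suc n"
  note sf = step_facts[OF P]
  have Pk: "\<And>k. k \<le> n \<Longrightarrow> P ! k = Tcomp p 0 n k" using prefix_nth[OF sf(5) pre] .
  have up: "?I \<subseteq> Tcomp p 0 n (Suc n)" using upper[OF _ sf(1)] sf(4) Pk[of n] by simp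
  define E where "E = epsR p (Suc n)"
  have Ec: "E \<in> carrierR (Suc n)" by (simp add: E_def eps_carrier)
  have Em: "\<And>t. t \<le> n \<Longrightarrow> markR p (Suc n) E t = 0" by (simp add: E_def markR_eps)
  have Etop: "markR p (Suc n) E (Suc n) = int p" by (simp add: E_def markR_eps_top)
  have rep: "\<And>y. y \<in> Tcomp p 0 n (Suc n) \<Longrightarrow> y = mulR p (Suc n) (constR (Suc n) (- y n)) E"
  proof -
    fix y assume y: "y \<in> Tcomp p 0 n (Suc n)"
    then have yc: "y \<in> carrierR (Suc n)" and ym: "\<And>t. t \<le> n \<Longrightarrow> markR p (Suc n) y t = 0"
      by (auto simp: Tcomp_def)
    have "markR p (Suc n) y n = y n * int p + y (Suc n)"
      using markR_step[of n "Suc n" p y] by (simp add: markR_top)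
    then have ytop: "y (Suc n) = - y n * int p" using ym[of n] by simp
    show "y = mulR p (Suc n) (constR (Suc n) (- y n)) E"
    proof (rule mark_eq[OF p yc mulR_carrier], intro allI impI)
      fix t assume "t \<le> Suc n"
      then have "t \<le> n \<or> t = Suc n" by auto
      moreover have "markR p (Suc n) (mulR p (Suc n) (constR (Suc n) (- y n)) E) t = (- y n) * markR p (Suc n) E t"
        using \<open>t \<le> Suc n\<close> by (rule markR_mul_const)
      moreover have "markR p (Suc n) y (Suc n) = y (Suc n)" by (rule markR_top)
      ultimately show "markR p (Suc n) y t = markR p (Suc n) (mulR p (Suc n) (constR (Suc n) (- y n)) E) t"
        using ym Em Etop ytop by auto
    qed
  qed
  show ?thesis
  proof (cases "?I \<subseteq> {zeroR}")
    case True
    have "zeroR \<in> ?I" using sf(1) by (simp add: is_ideal_R_def)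
    then have "?I = {zeroR}" using True by blast
    moreover have "Tcomp p 0 (Suc n) (Suc n) = {zeroR}"
      using mark_zero_imp[OF p] zero_carrier markR_zero by (auto simp: Tcomp_def)
    ultimately show ?thesis by simp
  next
    case False
    then obtain z where z: "z \<in> ?I" "z \<noteq> zeroR" by blast
    have zT: "z \<in> Tcomp p 0 n (Suc n)" using up z by blast
    define d where "d = - z n"
    have zrep: "z = mulR p (Suc n) (constR (Suc n) d) E" using rep[OF zT] by (simp add: d_def)
    have zc: "z \<in> carrierR (Suc n)" using zT by (simp add: Tcomp_def)
    have zm: "\<And>t. t \<le> n \<Longrightarrow> markR p (Suc n) z t = 0" using zT by (auto simp: Tcomp_def)
    have ztop: "markR p (Suc n) z (Suc n) = d * int p" using zrep Etop by (simp add: markR_mul_const)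
    have d0: "d \<noteq> 0"
    proof
      assume "d = 0"
      then have "\<forall>t\<le>Suc n. markR p (Suc n) z t = 0" using zm ztop by (auto simp: le_Suc_eq)
      then show False using mark_zero_imp[OF p zc] z(2) by simp
    qed
    define b where "b = constR 0 d"
    have bc: "b \<in> carrierR 0" by (simp add: b_def constR_carrier)
    have "E \<in> P ! Suc n \<or> b \<in> P ! 0"
    proof (rule prime_cond[OF P _ order_refl Ec bc])
      show "0 \<le> Suc n" by simp
      fix i j :: nat assume i: "i \<le> Suc n" and j: "j \<le> 0"
      then have j0: "j = 0" by simp
      have rb: "resR p 0 0 b = b" using res_id[OF p bc] .
      show "mulR p (max i j) (jndR p i (max i j) (resR p (Suc n) i E)) (jndR p j (max i j) (resR p 0 j b)) \<in> P ! max i j"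
      proof (cases "i \<le> n")
        case True
        let ?El = "mulR p i (jndR p i i (resR p (Suc n) i E)) (jndR p 0 i b)"
        have "\<forall>t\<le>i. markR p i ?El t = 0"
        proof (intro allI impI)
          fix t assume t: "t \<le> i"
          have "markR p i (jndR p i i (resR p (Suc n) i E)) t = markR p i (resR p (Suc n) i E) t"
            using p t by (simp add: markR_jnd psi_same)
          also have "\<dots> = markR p (Suc n) E t" using t i by (simp add: markR_res)
          also have "\<dots> = 0" using Em t True by simp
          finally show "markR p i ?El t = 0" using t by (simp add: markR_mul)
        qed
        then have "?El = zeroR" using mark_zero_imp[OF p mulR_carrier] by blast
        moreover have "zeroR \<in> P ! i" using Pk[OF True] zero_carrier markR_zero by (simp add: Tcomp_def)
        ultimately show ?thesis using j0 rb by simp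
      next
        case False
        then have iS: "i = Suc n" using i by simp
        have "mulR p (Suc n) (jndR p (Suc n) (Suc n) (resR p (Suc n) (Suc n) E)) (jndR p 0 (Suc n) b)
             = mulR p (Suc n) E (jndR p 0 (Suc n) b)"
          using res_id[OF p Ec] jnd_id[OF p Ec] by simp
        also have "\<dots> = z"
        proof (rule mark_eq[OF p mulR_carrier zc], intro allI impI)
          fix t assume "t \<le> Suc n"
          then have "t \<le> n \<or> t = Suc n" by auto
          moreover have "markR p (Suc n) (jndR p 0 (Suc n) b) (Suc n) = d"
            using markR_jnd_top[OF p, of 0 "Suc n" b] by (simp add: b_def constR_def)
          ultimately show "markR p (Suc n) (mulR p (Suc n) E (jndR p 0 (Suc n) b)) t = markR p (Suc n) z t"
            using Em zm Etop ztop by (auto simp: markR_mul)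
        qed
        finally show ?thesis using iS j0 rb z(1) by simp
      qed
    qed
    moreover have "b \<notin> P ! 0"
    proof
      assume "b \<in> P ! 0"
      then have "b \<in> Tcomp p 0 n 0" using Pk[of 0] by simp
      then show False using d0 by (simp add: Tcomp_def b_def markR_const)
    qed
    ultimately have EI: "E \<in> ?I" by blast
    have "Tcomp p 0 n (Suc n) \<subseteq> ?I"
    proof
      fix y assume "y \<in> Tcomp p 0 n (Suc n)"
      then have "y = mulR p (Suc n) (constR (Suc n) (- y n)) E" by (rule rep)
      then show "y \<in> ?I" using ideal_mul[OF sf(1) constR_carrier EI] by metis
    qed
    then show ?thesis using up by blast
  qed
qed



lemma caseD:
  assumes p: "prime p" and P: "is_prime_TF p (Suc n) P" and pre: "butlast P = Tlist p (int p) 0 n"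
  shows "P ! Suc n = Tcomp p (int p) 0 (Suc n)"
proof -
  let ?I = "P ! Suc n"
  let ?P = "int p"
  note sf = step_facts[OF P]
  have Pk: "\<And>k. k \<le> n \<Longrightarrow> P ! k = Tcomp p ?P 0 k" using prefix_nth[OF sf(5) pre] .
  have up: "?I \<subseteq> Tcomp p ?P 0 (Suc n)" using upper[OF _ sf(1)] sf(4) Pk[of n] by simp
  have pp: "0 < p" using prime_gt_0_nat[OF p] .
  define x1 where "x1 = basisR n"
  have x1c: "x1 \<in> carrierR (Suc n)" by (auto simp: x1_def basisR_def carrierR_def)
  have x1m: "\<And>t. t \<le> n \<Longrightarrow> markR p (Suc n) x1 t = ?P" by (simp add: x1_def markR_basis)
  have x1top: "markR p (Suc n) x1 (Suc n) = 0" by (simp add: x1_def markR_basis)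
  have resm: "\<And>i. i \<le> Suc n \<Longrightarrow> ?P dvd markR p i (resR p (Suc n) i x1) 0"
    using x1m x1top by (auto simp: markR_res le_Suc_eq)
  have jndm: "\<And>i M. i \<le> M \<Longrightarrow> M \<le> Suc n \<Longrightarrow> i \<le> Suc n \<Longrightarrow> ?P dvd markR p M (jndR p i M (resR p (Suc n) i x1)) 0"
  proof -
    fix i M assume iM: "i \<le> M" "M \<le> Suc n" "i \<le> Suc n"
    have "markR p M (jndR p i M (resR p (Suc n) i x1)) 0 = markR p i (resR p (Suc n) i x1) 0 ^ (p ^ (M - i))"
      using iM p by (simp add: markR_jnd psi_def)
    then show "?P dvd markR p M (jndR p i M (resR p (Suc n) i x1)) 0"
      using resm[OF iM(3)] pp by (simp add: dvd_pow_pos)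
  qed
  have inI: "\<And>w. w \<in> Tcomp p ?P 0 n \<Longrightarrow> w \<in> ?I" using sf(2) Pk[of n] by auto
  have jinI: "\<And>w. w \<in> Tcomp p ?P 0 n \<Longrightarrow> jndR p n (Suc n) w \<in> ?I" using sf(3) Pk[of n] by auto
  have Nj: "\<And>j. j \<le> n \<Longrightarrow> jndR p j (Suc n) (resR p (Suc n) j x1) \<in> ?I"
  proof -
    fix j assume j: "j \<le> n"
    have "jndR p j (Suc n) (resR p (Suc n) j x1) = jndR p n (Suc n) (jndR p j n (resR p (Suc n) j x1))"
      using jnd_comp[OF p j resR_carrier] .
    moreover have "jndR p j n (resR p (Suc n) j x1) \<in> Tcomp p ?P 0 n"
      using jndm[of j n] j jnd_carrier[OF j] by (simp add: Tcomp_def)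
    ultimately show "jndR p j (Suc n) (resR p (Suc n) j x1) \<in> ?I" using jinI by simp
  qed
  have x1id: "jndR p (Suc n) (Suc n) (resR p (Suc n) (Suc n) x1) = x1"
    using res_id[OF p x1c] jnd_id[OF p x1c] by simp
  have cP: "constR n ?P \<in> Tcomp p ?P 0 n" using constR_carrier by (simp add: Tcomp_def markR_const)
  have sq: "mulR p (Suc n) x1 x1 = constR n ?P"
  proof (rule mark_eq[OF p mulR_carrier])
    show "constR n ?P \<in> carrierR (Suc n)" by (simp add: constR_def carrierR_def)
  next
    show "\<forall>t\<le>Suc n. markR p (Suc n) (mulR p (Suc n) x1 x1) t = markR p (Suc n) (constR n ?P) t"
    proof (intro allI impI)
    fix t assume t: "t \<le> Suc n"
    show "markR p (Suc n) (mulR p (Suc n) x1 x1) t = markR p (Suc n) (constR n ?P) t"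
    proof (cases "t \<le> n")
      case True then show ?thesis
        using x1m markR_ind[OF constR_carrier True, of p ?P] by (simp add: markR_mul markR_const)
    next
      case False then have "t = Suc n" using t by simp
      then show ?thesis using x1top markR_mul[of "Suc n" "Suc n" p x1 x1] by (simp add: constR_def markR_top)
    qed
    qed
  qed
  have "x1 \<in> ?I \<or> x1 \<in> ?I"
  proof (rule prime_cond[OF P order_refl order_refl x1c x1c])
    fix i j assume i: "i \<le> Suc n" and j: "j \<le> Suc n"
    let ?M = "max i j"
    show "mulR p ?M (jndR p i ?M (resR p (Suc n) i x1)) (jndR p j ?M (resR p (Suc n) j x1)) \<in> P ! ?M"
    proof (cases "?M \<le> n")
      case True
      have "?P dvd markR p ?M (jndR p i ?M (resR p (Suc n) i x1)) 0" using jndm[of i ?M] i True by simp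
      then have "?P dvd markR p ?M (mulR p ?M (jndR p i ?M (resR p (Suc n) i x1)) (jndR p j ?M (resR p (Suc n) j x1))) 0"
        by (simp add: markR_mul)
      then show ?thesis using Pk[OF True] mulR_carrier by (simp add: Tcomp_def)
    next
      case False
      then have M: "?M = Suc n" using i j by (auto simp: max_def split: if_splits)
      show ?thesis
      proof (cases "i = Suc n")
        case iS: True
        show ?thesis
        proof (cases "j = Suc n")
          case True
          then show ?thesis using iS x1id sq inI[OF cP] by simp
        next
          case False
          then have "j \<le> n" using j by simp
          then show ?thesis using iS M x1id ideal_mul[OF sf(1) x1c Nj] by simp
        qed
      next
        case False
        then have iN: "i \<le> n" and jS: "j = Suc n" using i M by auto
        have "mulR p (Suc n) (jndR p i (Suc n) (resR p (Suc n) i x1)) x1 = mulR p (Suc n) x1 (jndR p i (Suc n) (resR p (Suc n) i x1))"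
          by (rule mulR_comm[OF p])
        then show ?thesis using jS M x1id ideal_mul[OF sf(1) x1c Nj[OF iN]] by simp
      qed
    qed
  qed
  then have x1I: "x1 \<in> ?I" by simp
  have "Tcomp p ?P 0 (Suc n) \<subseteq> ?I"
  proof
    fix y assume y: "y \<in> Tcomp p ?P 0 (Suc n)"
    then have yc: "y \<in> carrierR (Suc n)" and "?P dvd markR p (Suc n) y 0" by (auto simp: Tcomp_def)
    then have "?P dvd y (Suc n)" using mark_cong[of 0 "Suc n" p y] by (metis dvd_diff_commute dvd_add_right_iff diff_add_cancel le0)
    then obtain d where d: "y (Suc n) = ?P * d" by (auto elim!: dvdE)
    define jq where "jq = jndR p n (Suc n) (constR n ?P)"
    have jqI: "jq \<in> ?I" using jinI[OF cP] by (simp add: jq_def)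
    have jqc: "jq \<in> carrierR (Suc n)" by (simp add: jq_def jnd_carrier)
    have jqtop: "jq (Suc n) = ?P" by (simp add: jq_def jndR_def constR_def)
    define z where "z = (\<lambda>i. y i - d * jq i - (y n - d * jq n) * x1 i)"
    have zc: "z \<in> carrierR n"
      unfolding carrierR_def
    proof (intro CollectI allI impI)
      fix i assume "n < i"
      then have "i = Suc n \<or> Suc n < i" by auto
      then show "z i = 0" using yc jqc d jqtop by (auto simp: z_def carrierR_def x1_def basisR_def)
    qed
    have zn: "z n = 0" by (simp add: z_def x1_def basisR_def)
    have "?P dvd markR p n z 0" using mark_cong[of 0 n p z] zn by simp
    then have "z \<in> Tcomp p ?P 0 n" using zc by (simp add: Tcomp_def)
    then have zI: "z \<in> ?I" by (rule inI)
    have "y = addR z (addR (mulR p (Suc n) (constR (Suc n) (y n - d * jq n)) x1) (mulR p (Suc n) (constR (Suc n) d) jq))"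
      using mul_const_vec[OF p x1c] mul_const_vec[OF p jqc] by (simp add: addR_def z_def)
    also have "\<dots> \<in> ?I"
      by (intro ideal_add[OF sf(1)] ideal_mul[OF sf(1)] constR_carrier zI x1I jqI)
    finally show "y \<in> ?I" .
  qed
  then show ?thesis using up by blast
qed



definition good :: "nat \<Rightarrow> nat \<Rightarrow> elt set list \<Rightarrow> bool" where
  "good p n P \<longleftrightarrow> (\<exists>q c. (q = 0 \<or> (prime q \<and> q \<noteq> int p)) \<and> c \<le> n \<and> P = Tlist p q c n)
     \<or> P = Tlist p (int p) 0 n"

lemma classify:
  assumes p: "prime p"
  shows "is_prime_TF p n P \<Longrightarrow> good p n P"
proof (induction n arbitrary: P)
  case 0
  obtain q where q: "q = 0 \<or> prime q" "P ! 0 = Tcomp p q 0 0" using level0[OF p 0] by blast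
  have "length P = 1" using 0 by (simp add: is_prime_TF_def is_TF_ideal_def)
  then have "P = [P ! 0]" by (cases P) auto
  then have PT: "P = Tlist p q 0 0" using q(2) by (simp add: Tlist_def)
  show ?case
  proof (cases "q = int p")
    case True then show ?thesis using PT by (simp add: good_def)
  next
    case False then show ?thesis using PT q(1) unfolding good_def by blast
  qed
next
  case (Suc n)
  note P = Suc.prems
  have IH: "good p n (butlast P)" using Suc.IH[OF prefix_prime[OF P]] .
  note sf = step_facts[OF P]
  have snoc: "P = butlast P @ [P ! Suc n]" using P_snoc[OF sf(5)] .
  show ?case
  proof (cases "butlast P = Tlist p (int p) 0 n")
    case True
    have "P ! Suc n = Tcomp p (int p) 0 (Suc n)" using caseD[OF p P True] .
    then have "P = Tlist p (int p) 0 (Suc n)" using snoc True by (simp add: Tlist_Suc)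
    then show ?thesis by (simp add: good_def)
  next
    case False
    then obtain q c where q: "q = 0 \<or> (prime q \<and> q \<noteq> int p)" and cn: "c \<le> n"
      and pre: "butlast P = Tlist p q c n" using IH by (auto simp: good_def)
    have Pn: "P ! n = Tcomp p q c n" using prefix_nth[OF sf(5) pre order_refl] .
    have I: "is_ideal_R p (Suc n) (P ! Suc n)" "Tcomp p q c n \<subseteq> P ! Suc n"
      "jndR p n (Suc n) ` Tcomp p q c n \<subseteq> P ! Suc n" "resR p (Suc n) n ` (P ! Suc n) \<subseteq> Tcomp p q c n"
      using sf Pn by auto
    show ?thesis
    proof (cases "c < n")
      case True
      have "P ! Suc n = Tcomp p q c (Suc n)" using caseA[OF p q True I] .
      then have "P = Tlist p q c (Suc n)" using snoc pre by (simp add: Tlist_Suc)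
      then show ?thesis using q cn unfolding good_def by (intro disjI1 exI[of _ q] exI[of _ c]) auto
    next
      case False
      then have cn': "c = n" using cn by simp
      have pre2: "butlast P = Tlist p q (Suc n) n" using pre cn' Tlist_same[of n n "Suc n"] by simp
      have "P ! Suc n = Tcomp p q n (Suc n) \<or> P ! Suc n = Tcomp p q (Suc n) (Suc n)"
      proof (cases "q = 0")
        case True
        then show ?thesis using caseB[OF p P] pre cn' by simp
      next
        case False
        then have "prime q" "q \<noteq> int p" using q by auto
        then show ?thesis using caseC[OF p _ _ I[unfolded cn']] by simp
      qed
      then have "P = Tlist p q n (Suc n) \<or> P = Tlist p q (Suc n) (Suc n)"
        using snoc pre pre2 cn' by (auto simp: Tlist_Suc)
      then show ?thesis
      proof
        assume "P = Tlist p q n (Suc n)"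
        then show ?thesis using q unfolding good_def by (intro disjI1 exI[of _ q] exI[of _ n]) auto
      next
        assume "P = Tlist p q (Suc n) (Suc n)"
        then show ?thesis using q unfolding good_def by (intro disjI1 exI[of _ q] exI[of _ "Suc n"]) auto
      qed
    qed
  qed
qed

lemma last_Tlist: "last (Tlist p q c n) = Tcomp p q c n"
  by (simp add: Tlist_def)

lemma calL_T:
  assumes "c \<le> n"
  shows "calL p (Tlist p q c n) = Tlist p q c (Suc n)"
proof -
  have "opL p (Suc n) (Tcomp p q c n) = Tcomp p q c (Suc n)"
    using assms by (auto simp: opL_def Tcomp_def markR_res resR_carrier)
  then show ?thesis by (simp add: calL_def Tlist_len last_Tlist Tlist_Suc)
qed

lemma calL_pow: "c \<le> n \<Longrightarrow> (calL p ^^ i) (Tlist p q c n) = Tlist p q c (n + i)"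
  by (induction i) (simp_all add: calL_T)

lemma calS_T:
  assumes p: "prime p" and q: "q = 0 \<or> (prime q \<and> q \<noteq> int p)"
  shows "calS p (Tlist p q n n) = Tlist p q (Suc n) (Suc n)"
proof -
  let ?T = "Tcomp p q n n"
  let ?T' = "Tcomp p q (Suc n) (Suc n)"
  have "opS p (Suc n) ?T = ?T'"
  proof
    have TF: "is_TF_ideal p (Suc n) (Tlist p q (Suc n) (Suc n))" by (rule T_TF[OF p])
    have "Suc n \<in> {1..Suc n}" by simp
    then have "indR n (Suc n) ` (Tlist p q (Suc n) (Suc n) ! n) \<subseteq> Tlist p q (Suc n) (Suc n) ! Suc n
       \<and> jndR p n (Suc n) ` (Tlist p q (Suc n) (Suc n) ! n) \<subseteq> Tlist p q (Suc n) (Suc n) ! Suc n"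
      using TF unfolding is_TF_ideal_def by (metis diff_Suc_1)
    moreover have "Tlist p q (Suc n) (Suc n) ! n = ?T" by (simp add: Tlist_nth Tcomp_same)
    moreover have "Tlist p q (Suc n) (Suc n) ! Suc n = ?T'" by (simp add: Tlist_nth)
    ultimately have "indR n (Suc n) ` ?T \<union> jndR p n (Suc n) ` ?T \<subseteq> ?T'" by simp
    then show "opS p (Suc n) ?T \<subseteq> ?T'"
      unfolding opS_def gen_ideal_def using T_ideal[OF p] by auto
  next
    show "?T' \<subseteq> opS p (Suc n) ?T"
      unfolding opS_def gen_ideal_def
    proof (rule Inter_greatest)
      fix J assume "J \<in> {J. is_ideal_R p (Suc n) J \<and> indR (Suc n - 1) (Suc n) ` ?T \<union> jndR p (Suc n - 1) (Suc n) ` ?T \<subseteq> J}"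
      then have J: "is_ideal_R p (Suc n) J" "?T \<subseteq> J" "jndR p n (Suc n) ` ?T \<subseteq> J"
        by (auto simp: indR_def)
      show "?T' \<subseteq> J"
      proof
        fix a assume a: "a \<in> ?T'"
        then have ac: "a \<in> carrierR (Suc n)" and am: "\<forall>t\<le>Suc n. q dvd markR p (Suc n) a t"
          by (auto simp: Tcomp_def)
        then have "q dvd a (Suc n)" using markR_top[of p "Suc n" a] by auto
        then obtain w where "a (Suc n) = q * w" by (auto elim!: dvdE)
        then have aw: "a (Suc n) = 0 * int p + w * q" by simp
        show "a \<in> J"
          by (rule lift[OF p order_refl hq_lemma[OF p q] J ac _ aw]) (use am in auto)
      qed
    qed
  qed
  moreover have "calS p (Tlist p q n n) = Tlist p q n n @ [opS p (Suc n) ?T]"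
    by (simp add: calS_def Tlist_len last_Tlist)
  moreover have "Tlist p q n n = Tlist p q (Suc n) n" by (rule Tlist_same) auto
  ultimately show ?thesis by (simp add: Tlist_Suc)
qed

lemma calS_pow:
  assumes "prime p" "q = 0 \<or> (prime q \<and> q \<noteq> int p)"
  shows "(calS p ^^ j) (Tlist p q 0 0) = Tlist p q j j"
  by (induction j) (simp_all add: calS_T[OF assms])

lemma princ_T: "princ x = Tlist p x 0 0"
  by (simp add: princ_def Tlist_def Tcomp_def markR_top)

lemma zeroTF_T:
  assumes p: "prime p"
  shows "zeroTF n = Tlist p 0 n n"
proof (rule nth_equalityI)
  show "length (zeroTF n) = length (Tlist p 0 n n)" by (simp add: zeroTF_def Tlist_len)
  fix m assume "m < length (zeroTF n)"
  then have m: "m \<le> n" by (simp add: zeroTF_def)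
  have "Tcomp p 0 n m = {zeroR}"
    using mark_zero_imp[OF p] zero_carrier markR_zero m by (auto simp: Tcomp_def min_absorb1)
  moreover have "zeroTF n ! m = {zeroR}" unfolding zeroTF_def using m by (simp only: nth_replicate[of m "Suc n"])
  ultimately show "zeroTF n ! m = Tlist p 0 n n ! m" using m by (simp add: Tlist_nth)
qed



lemma strict:
  assumes p: "prime p" and q: "q = 0 \<or> (prime q \<and> q \<noteq> int p)" and cr: "c < r"
  shows "ideal_less (Tlist p q (Suc c) r) (Tlist p q c r)"
  unfolding ideal_less_def ideal_le_def
proof (intro conjI allI impI)
  show "length (Tlist p q (Suc c) r) = length (Tlist p q c r)" by (simp add: Tlist_len)
  fix k assume "k < length (Tlist p q (Suc c) r)"
  then have "k \<le> r" by (simp add: Tlist_len)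
  then show "Tlist p q (Suc c) r ! k \<subseteq> Tlist p q c r ! k"
    by (auto simp: Tlist_nth Tcomp_def)
next
  define w where "w = (\<lambda>i. int p ^ (r - c) * constR r 1 i + (-1) * basisR c i)"
  have wc: "w \<in> carrierR r" using cr by (auto simp: w_def constR_def basisR_def carrierR_def)
  have wm: "\<And>t. t \<le> r \<Longrightarrow> markR p r w t = int p ^ (r - c) - (if t \<le> c then int p ^ (r - c) else 0)"
    unfolding w_def using cr by (simp only: markR_lin markR_const markR_basis) auto
  have "w \<in> Tcomp p q c r" using wc wm cr by (auto simp: Tcomp_def)
  moreover have "w \<notin> Tcomp p q (Suc c) r"
  proof
    assume "w \<in> Tcomp p q (Suc c) r"
    then have "q dvd markR p r w (Suc c)" using cr by (auto simp: Tcomp_def)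
    then have d: "q dvd int p ^ (r - c)" using wm[of "Suc c"] cr by simp
    show False
    proof (cases "q = 0")
      case True then show False using d p prime_gt_0_nat by auto
    next
      case False
      then have "prime q" "q \<noteq> int p" using q by auto
      then show False using d prime_dvd_power q_ndvd_p[OF p] by blast
    qed
  qed
  ultimately have "Tlist p q (Suc c) r ! r \<noteq> Tlist p q c r ! r" by (auto simp: Tlist_nth)
  then show "Tlist p q (Suc c) r \<noteq> Tlist p q c r" by auto
qed

lemma Tcomp00_inj:
  assumes "0 \<le> a" "0 \<le> b" "Tcomp p a 0 0 = Tcomp p b 0 0"
  shows "a = b"
proof -
  have "constR 0 a \<in> Tcomp p a 0 0" "constR 0 b \<in> Tcomp p b 0 0"
    using constR_carrier by (auto simp: Tcomp_def markR_const)
  then have "constR 0 a \<in> Tcomp p b 0 0" "constR 0 b \<in> Tcomp p a 0 0" using assms(3) by auto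
  then have "b dvd markR p 0 (constR 0 a) 0" "a dvd markR p 0 (constR 0 b) 0" by (auto simp: Tcomp_def)
  then have "b dvd a" "a dvd b" by (auto simp: markR_const)
  then show ?thesis using assms by (simp add: zdvd_antisym_nonneg)
qed

lemma Tlist0: "Tlist p q c r ! 0 = Tcomp p q 0 0"
  by (simp add: Tlist_nth Tcomp_def)

lemma formA:
  assumes p: "prime p" and q: "prime q" "q \<noteq> p" and i: "i \<le> r"
  shows "(calL p ^^ i) ((calS p ^^ (r - i)) (princ (int q))) = Tlist p (int q) (r - i) r"
proof -
  have qq: "int q = 0 \<or> (prime (int q) \<and> int q \<noteq> int p)" using q by simp
  have "(calS p ^^ (r - i)) (princ (int q)) = Tlist p (int q) (r - i) (r - i)"
    using calS_pow[OF p qq] princ_T[of "int q" p] by simp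
  then show ?thesis using calL_pow[where c="r - i" and n="r - i" and p=p and i=i and q="int q"] i by simp
qed

lemma formB: "(calL p ^^ r) (princ (int p)) = Tlist p (int p) 0 r"
  using calL_pow[where c=0 and n=0 and p=p and i=r and q="int p"] princ_T[of "int p" p] by simp

lemma formZ:
  assumes p: "prime p" and i: "i \<le> r"
  shows "(calL p ^^ i) (zeroTF (r - i)) = Tlist p 0 (r - i) r"
  using calL_pow[where c="r - i" and n="r - i" and p=p and i=i and q=0] zeroTF_T[OF p, of "r - i"] i by simp

lemma good_cases:
  assumes p: "prime p" and P: "is_prime_TF p r P"
  obtains (B) "P = Tlist p (int p) 0 r"
    | (Z) c where "c \<le> r" "P = Tlist p 0 c r"
    | (A) q c where "prime q" "q \<noteq> p" "c \<le> r" "P = Tlist p (int q) c r"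
proof -
  have "good p r P" using classify[OF p P] .
  then consider "P = Tlist p (int p) 0 r"
    | q c where "q = 0 \<or> (prime q \<and> q \<noteq> int p)" "c \<le> r" "P = Tlist p q c r"
    unfolding good_def by blast
  then show ?thesis
  proof cases
    case 1 then show ?thesis by (rule B)
  next
    case (2 q c)
    show ?thesis
    proof (cases "q = 0")
      case True then show ?thesis using 2 Z by simp
    next
      case False
      then have qq: "prime q" "q \<noteq> int p" using 2 by auto
      then have "q \<ge> 0" by (simp add: prime_ge_0_int)
      then have "q = int (nat q)" by simp
      moreover have "prime (nat q)" using qq by simp
      moreover have "nat q \<noteq> p" using qq \<open>q = int (nat q)\<close> by auto
      ultimately show ?thesis using A[of "nat q" c] 2 by auto
    qed
  qed
qed



lemma zero_Tcomp: "prime p \<Longrightarrow> {zeroR} = Tcomp p 0 0 0"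
  using mark_zero_imp[of p _ 0] zero_carrier markR_zero by (auto simp: Tcomp_def)

lemma princ0: "princ x ! 0 = Tcomp p x 0 0"
  using princ_T[of x p] by (simp add: Tlist0)

lemma setcomp_cong:
  fixes f g :: "nat \<Rightarrow> 'a" and r :: nat
  assumes "\<And>i. i \<le> r \<Longrightarrow> f i = g i"
  shows "{f i | i. i \<le> r} = {g i | i. i \<le> r}"
proof
  show "{f i | i. i \<le> r} \<subseteq> {g i | i. i \<le> r}"
  proof
    fix x assume "x \<in> {f i | i. i \<le> r}"
    then obtain i where "i \<le> r" "x = f i" by blast
    then have "x = g i" "i \<le> r" using assms by auto
    then show "x \<in> {g i | i. i \<le> r}" by blast
  qed
  show "{g i | i. i \<le> r} \<subseteq> {f i | i. i \<le> r}"
  proof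
    fix x assume "x \<in> {g i | i. i \<le> r}"
    then obtain i where "i \<le> r" "x = g i" by blast
    then have "x = f i" "i \<le> r" using assms by auto
    then show "x \<in> {f i | i. i \<le> r}" by blast
  qed
qed

theorem mainTheorem1:
  fixes p r :: nat
  assumes "prime p"
  shows
    "(\<forall>q::nat. prime q \<longrightarrow> q \<noteq> p \<longrightarrow>
        {P. is_prime_TF p r P \<and> P ! 0 = princ (int q) ! 0}
          = {(calL p ^^ i) ((calS p ^^ (r - i)) (princ (int q))) | i. i \<le> r}
      \<and> (\<forall>i<r. ideal_less ((calL p ^^ i) ((calS p ^^ (r - i)) (princ (int q))))
                           ((calL p ^^ Suc i) ((calS p ^^ (r - Suc i)) (princ (int q))))))
   \<and> {P. is_prime_TF p r P \<and> P ! 0 = princ (int p) ! 0} = {(calL p ^^ r) (princ (int p))}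
   \<and> {P. is_prime_TF p r P \<and> P ! 0 = {zeroR}} = {(calL p ^^ i) (zeroTF (r - i)) | i. i \<le> r}
   \<and> (\<forall>i<r. ideal_less ((calL p ^^ i) (zeroTF (r - i))) ((calL p ^^ Suc i) (zeroTF (r - Suc i))))
   \<and> SpecOmega p r = {(calL p ^^ r) (princ (int p))}
        \<union> {(calL p ^^ i) (zeroTF (r - i)) | i. i \<le> r}
        \<union> {(calL p ^^ i) ((calS p ^^ (r - i)) (princ (int q))) | i q. i \<le> r \<and> prime q \<and> q \<noteq> p}"
proof -
  note p = assms
  have pp: "prime (int p)" using p by simp
  have z0: "{zeroR} = Tcomp p 0 0 0" by (rule zero_Tcomp[OF p])
  have P1: "prime q \<Longrightarrow> q \<noteq> p \<Longrightarrow>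
        {P. is_prime_TF p r P \<and> P ! 0 = princ (int q) ! 0}
          = {(calL p ^^ i) ((calS p ^^ (r - i)) (princ (int q))) | i. i \<le> r}
      \<and> (\<forall>i<r. ideal_less ((calL p ^^ i) ((calS p ^^ (r - i)) (princ (int q))))
                           ((calL p ^^ Suc i) ((calS p ^^ (r - Suc i)) (princ (int q)))))" for q
  proof -
    assume q: "prime q" "q \<noteq> p"
    have qq: "int q = 0 \<or> (prime (int q) \<and> int q \<noteq> int p)" using q by simp
    have fA: "\<And>i. i \<le> r \<Longrightarrow> (calL p ^^ i) ((calS p ^^ (r - i)) (princ (int q))) = Tlist p (int q) (r - i) r"
      using formA[OF p q] .
    have "{P. is_prime_TF p r P \<and> P ! 0 = princ (int q) ! 0} = {Tlist p (int q) (r - i) r | i. i \<le> r}"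
    proof
      show "{P. is_prime_TF p r P \<and> P ! 0 = princ (int q) ! 0} \<subseteq> {Tlist p (int q) (r - i) r | i. i \<le> r}"
      proof
        fix P assume "P \<in> {P. is_prime_TF p r P \<and> P ! 0 = princ (int q) ! 0}"
        then have P: "is_prime_TF p r P" and P0: "P ! 0 = Tcomp p (int q) 0 0" by (auto simp: princ0)
        show "P \<in> {Tlist p (int q) (r - i) r | i. i \<le> r}"
        proof (cases rule: good_cases[OF p P, case_names B Z A])
          case B
          then have "Tcomp p (int p) 0 0 = Tcomp p (int q) 0 0" using P0 by (simp add: Tlist0)
          then have "int p = int q" by (rule Tcomp00_inj[rotated 2]) auto
          then show ?thesis using q by simp
        next
          case (Z c)
          then have "Tcomp p 0 0 0 = Tcomp p (int q) 0 0" using P0 by (simp add: Tlist0)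
          then have "0 = int q" by (rule Tcomp00_inj[rotated 2]) auto
          then show ?thesis using q by simp
        next
          case (A q' c)
          then have "Tcomp p (int q') 0 0 = Tcomp p (int q) 0 0" using P0 by (simp add: Tlist0)
          then have "int q' = int q" by (rule Tcomp00_inj[rotated 2]) auto
          then have "P = Tlist p (int q) (r - (r - c)) r" using A(3,4) by simp
          moreover have "r - c \<le> r" by simp
          ultimately show ?thesis by blast
        qed
      qed
      show "{Tlist p (int q) (r - i) r | i. i \<le> r} \<subseteq> {P. is_prime_TF p r P \<and> P ! 0 = princ (int q) ! 0}"
      proof
        fix P assume "P \<in> {Tlist p (int q) (r - i) r | i. i \<le> r}"
        then obtain i where Pi: "P = Tlist p (int q) (r - i) r" by blast
        have "is_prime_TF p r (Tlist p (int q) (r - i) r)" using T_prime[OF p, of "int q" r "r - i"] q by simp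
        moreover have "Tlist p (int q) (r - i) r ! 0 = princ (int q) ! 0" by (simp add: princ0[of _ p] Tlist0)
        ultimately show "P \<in> {P. is_prime_TF p r P \<and> P ! 0 = princ (int q) ! 0}" using Pi by simp
      qed
    qed
    moreover have "{(calL p ^^ i) ((calS p ^^ (r - i)) (princ (int q))) | i. i \<le> r} = {Tlist p (int q) (r - i) r | i. i \<le> r}"
      by (rule setcomp_cong) (rule fA)
    moreover have "\<forall>i<r. ideal_less ((calL p ^^ i) ((calS p ^^ (r - i)) (princ (int q))))
                           ((calL p ^^ Suc i) ((calS p ^^ (r - Suc i)) (princ (int q))))"
    proof (intro allI impI)
      fix i assume i: "i < r"
      have "r - i = Suc (r - Suc i)" using i by simp
      then show "ideal_less ((calL p ^^ i) ((calS p ^^ (r - i)) (princ (int q))))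
                           ((calL p ^^ Suc i) ((calS p ^^ (r - Suc i)) (princ (int q))))"
        using fA[of i] fA[of "Suc i"] i strict[OF p qq, of "r - Suc i" r] by simp
    qed
    ultimately show ?thesis by simp
  qed
  have fB: "(calL p ^^ r) (princ (int p)) = Tlist p (int p) 0 r" by (rule formB)
  have fZ: "\<And>i. i \<le> r \<Longrightarrow> (calL p ^^ i) (zeroTF (r - i)) = Tlist p 0 (r - i) r"
    using formZ[OF p] .
  have P2: "{P. is_prime_TF p r P \<and> P ! 0 = princ (int p) ! 0} = {(calL p ^^ r) (princ (int p))}"
  proof
    show "{P. is_prime_TF p r P \<and> P ! 0 = princ (int p) ! 0} \<subseteq> {(calL p ^^ r) (princ (int p))}"
    proof
      fix P assume "P \<in> {P. is_prime_TF p r P \<and> P ! 0 = princ (int p) ! 0}"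
      then have P: "is_prime_TF p r P" and P0: "P ! 0 = Tcomp p (int p) 0 0" by (auto simp: princ0)
      show "P \<in> {(calL p ^^ r) (princ (int p))}"
      proof (cases rule: good_cases[OF p P, case_names B Z A])
        case B then show ?thesis using fB by simp
      next
        case (Z c)
        then have "Tcomp p 0 0 0 = Tcomp p (int p) 0 0" using P0 by (simp add: Tlist0)
        then have "0 = int p" by (rule Tcomp00_inj[rotated 2]) auto
        then show ?thesis using p by simp
      next
        case (A q' c)
        then have "Tcomp p (int q') 0 0 = Tcomp p (int p) 0 0" using P0 by (simp add: Tlist0)
        then have "int q' = int p" by (rule Tcomp00_inj[rotated 2]) auto
        then show ?thesis using A by simp
      qed
    qed
    show "{(calL p ^^ r) (princ (int p))} \<subseteq> {P. is_prime_TF p r P \<and> P ! 0 = princ (int p) ! 0}"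
      using T_prime[OF p, of "int p"] pp fB by (simp add: princ0[of _ p] Tlist0)
  qed
  have P3: "{P. is_prime_TF p r P \<and> P ! 0 = {zeroR}} = {(calL p ^^ i) (zeroTF (r - i)) | i. i \<le> r}"
  proof -
    have "{(calL p ^^ i) (zeroTF (r - i)) | i. i \<le> r} = {Tlist p 0 (r - i) r | i. i \<le> r}"
      by (rule setcomp_cong) (rule fZ)
    moreover have "{P. is_prime_TF p r P \<and> P ! 0 = {zeroR}} = {Tlist p 0 (r - i) r | i. i \<le> r}"
    proof
      show "{P. is_prime_TF p r P \<and> P ! 0 = {zeroR}} \<subseteq> {Tlist p 0 (r - i) r | i. i \<le> r}"
      proof
        fix P assume "P \<in> {P. is_prime_TF p r P \<and> P ! 0 = {zeroR}}"
        then have P: "is_prime_TF p r P" and P0: "P ! 0 = Tcomp p 0 0 0" using z0 by auto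
        show "P \<in> {Tlist p 0 (r - i) r | i. i \<le> r}"
        proof (cases rule: good_cases[OF p P, case_names B Z A])
          case B
          then have "Tcomp p (int p) 0 0 = Tcomp p 0 0 0" using P0 by (simp add: Tlist0)
          then have "int p = 0" by (rule Tcomp00_inj[rotated 2]) auto
          then show ?thesis using p by simp
        next
          case (Z c)
          then have "P = Tlist p 0 (r - (r - c)) r" by simp
          moreover have "r - c \<le> r" by simp
          ultimately show ?thesis by blast
        next
          case (A q' c)
          then have "Tcomp p (int q') 0 0 = Tcomp p 0 0 0" using P0 by (simp add: Tlist0)
          then have "int q' = 0" by (rule Tcomp00_inj[rotated 2]) auto
          then show ?thesis using A by simp
        qed
      qed
      show "{Tlist p 0 (r - i) r | i. i \<le> r} \<subseteq> {P. is_prime_TF p r P \<and> P ! 0 = {zeroR}}"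
        using T_prime[OF p] z0 by (auto simp: Tlist0)
    qed
    ultimately show ?thesis by simp
  qed
  have P4: "\<forall>i<r. ideal_less ((calL p ^^ i) (zeroTF (r - i))) ((calL p ^^ Suc i) (zeroTF (r - Suc i)))"
  proof (intro allI impI)
    fix i assume i: "i < r"
    have "r - i = Suc (r - Suc i)" using i by simp
    then show "ideal_less ((calL p ^^ i) (zeroTF (r - i))) ((calL p ^^ Suc i) (zeroTF (r - Suc i)))"
      using fZ[of i] fZ[of "Suc i"] i strict[OF p _, of 0 "r - Suc i" r] by simp
  qed
  have P5: "SpecOmega p r = {(calL p ^^ r) (princ (int p))}
        \<union> {(calL p ^^ i) (zeroTF (r - i)) | i. i \<le> r}
        \<union> {(calL p ^^ i) ((calS p ^^ (r - i)) (princ (int q))) | i q. i \<le> r \<and> prime q \<and> q \<noteq> p}"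
  proof
    show "SpecOmega p r \<subseteq> {(calL p ^^ r) (princ (int p))}
        \<union> {(calL p ^^ i) (zeroTF (r - i)) | i. i \<le> r}
        \<union> {(calL p ^^ i) ((calS p ^^ (r - i)) (princ (int q))) | i q. i \<le> r \<and> prime q \<and> q \<noteq> p}"
    proof
      fix P assume "P \<in> SpecOmega p r"
      then have P: "is_prime_TF p r P" by (simp add: SpecOmega_def)
      show "P \<in> {(calL p ^^ r) (princ (int p))}
        \<union> {(calL p ^^ i) (zeroTF (r - i)) | i. i \<le> r}
        \<union> {(calL p ^^ i) ((calS p ^^ (r - i)) (princ (int q))) | i q. i \<le> r \<and> prime q \<and> q \<noteq> p}"
      proof (cases rule: good_cases[OF p P, case_names B Z A])
        case B then show ?thesis using fB by simp
      next
        case (Z c)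
        then have "P = (calL p ^^ (r - c)) (zeroTF (r - (r - c)))" using fZ[of "r - c"] by simp
        moreover have "r - c \<le> r" by simp
        ultimately have "P \<in> {(calL p ^^ i) (zeroTF (r - i)) | i. i \<le> r}" by blast
        then show ?thesis by blast
      next
        case (A q c)
        then have "P = (calL p ^^ (r - c)) ((calS p ^^ (r - (r - c))) (princ (int q)))"
          using formA[OF p A(1,2), of "r - c" r] by simp
        moreover have "r - c \<le> r" by simp
        ultimately have "P \<in> {(calL p ^^ i) ((calS p ^^ (r - i)) (princ (int q))) | i q. i \<le> r \<and> prime q \<and> q \<noteq> p}"
          using A(1,2) by blast
        then show ?thesis by blast
      qed
    qed
    show "{(calL p ^^ r) (princ (int p))}
        \<union> {(calL p ^^ i) (zeroTF (r - i)) | i. i \<le> r}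
        \<union> {(calL p ^^ i) ((calS p ^^ (r - i)) (princ (int q))) | i q. i \<le> r \<and> prime q \<and> q \<noteq> p}
       \<subseteq> SpecOmega p r"
    proof
      fix P assume "P \<in> {(calL p ^^ r) (princ (int p))}
        \<union> {(calL p ^^ i) (zeroTF (r - i)) | i. i \<le> r}
        \<union> {(calL p ^^ i) ((calS p ^^ (r - i)) (princ (int q))) | i q. i \<le> r \<and> prime q \<and> q \<noteq> p}"
      then consider (c1) "P = (calL p ^^ r) (princ (int p))"
        | (c2) i where "i \<le> r" "P = (calL p ^^ i) (zeroTF (r - i))"
        | (c3) i q where "i \<le> r" "prime q" "q \<noteq> p" "P = (calL p ^^ i) ((calS p ^^ (r - i)) (princ (int q)))"
        by blast
      then show "P \<in> SpecOmega p r"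
      proof cases
        case c1 then show ?thesis using T_prime[OF p, of "int p" r 0] pp fB by (simp add: SpecOmega_def)
      next
        case (c2 i) then show ?thesis using T_prime[OF p, of 0 r "r - i"] fZ[of i] by (simp add: SpecOmega_def)
      next
        case (c3 i q) then show ?thesis using T_prime[OF p, of "int q" r "r - i"] formA[OF p c3(2,3) c3(1)]
          by (simp add: SpecOmega_def)
      qed
    qed
  qed
  show ?thesis
    apply (intro conjI)
    subgoal by (intro allI impI) (rule P1)
    subgoal by (rule P2)
    subgoal by (rule P3)
    subgoal by (rule P4)
    subgoal by (rule P5)
    done
qed


end
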